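(* Let $G$ be an instance of the rank-maximal matchings problem (with last-resort posts added, as described in the context), let $M$ be a rank-maximal matching in $G$, and let $G_M$ be the switching graph of $M$. If $T$ is a switching path in $G_M$, then $M\cdot T$ is a rank-maximal matching in $G$. Likewise, if $C$ is a switching cycle in $G_M$, then $M\cdot C$ is a rank-maximal matching in $G$.
   Context: An instance is a bipartite graph $G=(\mathcal{A}\cup\mathcal{P},E)$, $\mathcal{A}$ a set of applicants, $\mathcal{P}$ a set of posts, with $E=E_1\cup\dots\cup E_r$ a disjoint union; $(a,p)\in E_i$ means $p$ is an $i$-th choice of $a$, written $\mathrm{rank}(a,p)=i$ (an applicant may rank several posts equally). Each applicant $a$ is additionally given its own dummy last-resort post $\ell(a)$ (adjacent only to $a$) with $(a,\ell(a))\in E_{r+1}$; the resulting instance with ranks $1,\dots,r+1$ is still called $G$. The signature of a matching $M$ is $(x_1,\dots,x_{r+1})$, where $x_i$ is the number of applicants matched by $M$ along a rank-$i$ edge; signatures are compared lexicographically, and $M$ is rank-maximal if its signature is maximum. For a matched vertex $u$, $M(u)$ is its partner. Even/odd/unreachable: given a bipartite graph and a maximum matching $N$ in it, a vertex is even (resp. odd) if there is an even (resp. odd) length $N$-alternating path from an $N$-unmatched vertex to it, and unreachable otherwise; these sets do not depend on the choice of maximum matching. Irving et al.'s algorithm: let $G'_1=(\mathcal{A}\cup\mathcal{P},E_1)$ and $M_1$ a maximum matching of $G'_1$. For $i=1,\dots,r$: (1) let $\mathcal{E}_i,\mathcal{O}_i,\mathcal{U}_i$ be the even, odd, unreachable vertices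 of $G'_i$; (2) delete all edges of rank $>i$ incident to vertices of $\mathcal{O}_i\cup\mathcal{U}_i$; (3) delete from $G'_i$ all edges joining a vertex of $\mathcal{O}_i$ to a vertex of $\mathcal{O}_i\cup\mathcal{U}_i$; (4) add the remaining edges of $E_{i+1}$ to get $G'_{i+1}$; (5) let $M_{i+1}$ be a maximum matching of $G'_{i+1}$ obtained by augmenting $M_i$. Let $\mathcal{E}_{r+1},\mathcal{O}_{r+1},\mathcal{U}_{r+1}$ be the even, odd, unreachable vertices of $G'_{r+1}$, and let the reduced graph $G'$ be $G'_{r+1}$ minus all edges joining $\mathcal{O}_{r+1}$ to $\mathcal{O}_{r+1}\cup\mathcal{U}_{r+1}$. These graphs and vertex sets do not depend on the choices made. Switching graph: for a rank-maximal matching $M$ (which matches every applicant), $G_M$ is the directed weighted graph with vertex set $\mathcal{P}$ and an edge $(p_i,p_j)$ whenever there is an applicant $a$ with $(a,p_i)\in M$ and $(a,p_j)$ an edge of $G'$, of weight $w(p_i,p_j)=\mathrm{rank}(a,p_j)-\mathrm{rank}(a,p_i)$. A sink is a post with no outgoing edge in $G_M$ that lies in $\mathcal{E}_1\cap\dots\cap\mathcal{E}_{r+1}$. The weight of a path or cycle is the sum of its edge weights. A switching path is a directed path $T=\langle p_0,\dots,p_{k-1}\rangle$ in $G_M$ ending in a sink with $w(T)=0$; a switching cycle is a directed cycle $C=\langle p_0,\dots,p_{k-1},p_0\rangle$ with $w(C)=0$. For a switching path $T$ with $a_i=M(p_i)$ ($0\le i\le k-2$), $M\cdot T$ is the matching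 in which $a_i$ is matched to $p_{i+1}$ and every other applicant keeps its $M$-partner; $M\cdot C$ is defined analogously ($M(p_i)$ gets $p_{i+1}$, indices mod $k$). *)

theory Defs
  imports Main
begin

definition is_matching :: "('a \<times> 'q) set \<Rightarrow> bool" where
  "is_matching M \<longleftrightarrow> (\<forall>a q a' q'. (a,q) \<in> M \<longrightarrow> (a',q') \<in> M \<longrightarrow> (a = a' \<longleftrightarrow> q = q'))"

definition matched_in :: "('a \<times> 'q) set \<Rightarrow> 'a + 'q \<Rightarrow> bool" where
  "matched_in N v \<longleftrightarrow> (case v of Inl a \<Rightarrow> (\<exists>q. (a,q) \<in> N) | Inr q \<Rightarrow> (\<exists>a. (a,q) \<in> N))"

definition uedge :: "('a \<times> 'q) set \<Rightarrow> 'a + 'q \<Rightarrow> 'a + 'q \<Rightarrow> bool" where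
  "uedge F u v \<longleftrightarrow> (case (u, v) of
      (Inl a, Inr q) \<Rightarrow> (a,q) \<in> F
    | (Inr q, Inl a) \<Rightarrow> (a,q) \<in> F
    | _ \<Rightarrow> False)"

definition max_matching :: "('a \<times> 'q) set \<Rightarrow> ('a \<times> 'q) set \<Rightarrow> bool" where
  "max_matching F N \<longleftrightarrow> N \<subseteq> F \<and> is_matching N \<and>
     (\<forall>N'. N' \<subseteq> F \<longrightarrow> is_matching N' \<longrightarrow> card N' \<le> card N)"

definition alt_path :: "('a + 'q) set \<Rightarrow> ('a \<times> 'q) set \<Rightarrow> ('a \<times> 'q) set \<Rightarrow> ('a + 'q) list \<Rightarrow> bool" where
  "alt_path V F N vs \<longleftrightarrow> vs \<noteq> [] \<and> distinct vs \<and> set vs \<subseteq> V \<and>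
     (\<forall>i. Suc i < length vs \<longrightarrow>
        uedge F (vs ! i) (vs ! Suc i) \<and> (uedge N (vs ! i) (vs ! Suc i) \<longleftrightarrow> odd i))"

definition even_wrt :: "('a + 'q) set \<Rightarrow> ('a \<times> 'q) set \<Rightarrow> ('a \<times> 'q) set \<Rightarrow> ('a + 'q) set" where
  "even_wrt V F N = {v \<in> V. \<exists>vs. alt_path V F N vs \<and> \<not> matched_in N (hd vs) \<and>
                          last vs = v \<and> even (length vs - 1)}"

definition odd_wrt :: "('a + 'q) set \<Rightarrow> ('a \<times> 'q) set \<Rightarrow> ('a \<times> 'q) set \<Rightarrow> ('a + 'q) set" where
  "odd_wrt V F N = {v \<in> V. \<exists>vs. alt_path V F N vs \<and> \<not> matched_in N (hd vs) \<and>
                          last vs = v \<and> odd (length vs - 1)}"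

text \<open>Even / odd / unreachable vertices of the graph (V,F), computed w.r.t. some maximum
  matching (they do not depend on the choice).\<close>
definition evens :: "('a + 'q) set \<Rightarrow> ('a \<times> 'q) set \<Rightarrow> ('a + 'q) set" where
  "evens V F = even_wrt V F (SOME N. max_matching F N)"

definition odds :: "('a + 'q) set \<Rightarrow> ('a \<times> 'q) set \<Rightarrow> ('a + 'q) set" where
  "odds V F = odd_wrt V F (SOME N. max_matching F N)"

definition unreach :: "('a + 'q) set \<Rightarrow> ('a \<times> 'q) set \<Rightarrow> ('a + 'q) set" where
  "unreach V F = V - evens V F - odds V F"

definition incident :: "('a + 'q) set \<Rightarrow> 'a \<times> 'q \<Rightarrow> bool" where
  "incident S e \<longleftrightarrow> Inl (fst e) \<in> S \<or> Inr (snd e) \<in> S"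

definition joins_OOU :: "('a + 'q) set \<Rightarrow> ('a + 'q) set \<Rightarrow> 'a \<times> 'q \<Rightarrow> bool" where
  "joins_OOU Odd Unr e \<longleftrightarrow>
     (Inl (fst e) \<in> Odd \<and> Inr (snd e) \<in> Odd \<union> Unr) \<or> (Inr (snd e) \<in> Odd \<and> Inl (fst e) \<in> Odd \<union> Unr)"

text \<open>Generic instance: vertex set V, edge set E, rank function rk.
  irving_stage V E rk n = (G'_(n+1), remaining not yet added edges).\<close>
primrec irving_stage :: "('a + 'q) set \<Rightarrow> ('a \<times> 'q) set \<Rightarrow> ('a \<Rightarrow> 'q \<Rightarrow> nat) \<Rightarrow> nat
    \<Rightarrow> ('a \<times> 'q) set \<times> ('a \<times> 'q) set" where
  "irving_stage V E rk 0 =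
     ({e \<in> E. case_prod rk e = 1}, {e \<in> E. case_prod rk e > 1})"
| "irving_stage V E rk (Suc n) =
     (let F = fst (irving_stage V E rk n);
          Rm = snd (irving_stage V E rk n);
          i = Suc n;
          Odd = odds V F;
          Unr = unreach V F;
          Rm' = {e \<in> Rm. \<not> (case_prod rk e > i \<and> incident (Odd \<union> Unr) e)};
          F' = {e \<in> F. \<not> joins_OOU Odd Unr e}
      in (F' \<union> {e \<in> Rm'. case_prod rk e = Suc i}, {e \<in> Rm'. case_prod rk e > Suc i}))"

text \<open>G'_i for i \<ge> 1\<close>
definition Gprime :: "('a + 'q) set \<Rightarrow> ('a \<times> 'q) set \<Rightarrow> ('a \<Rightarrow> 'q \<Rightarrow> nat) \<Rightarrow> nat \<Rightarrow> ('a \<times> 'q) set" where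
  "Gprime V E rk i = fst (irving_stage V E rk (i - 1))"

text \<open>reduced graph G', where R is the largest rank (R = r+1 for the extended instance)\<close>
definition reduced_graph :: "('a + 'q) set \<Rightarrow> ('a \<times> 'q) set \<Rightarrow> ('a \<Rightarrow> 'q \<Rightarrow> nat) \<Rightarrow> nat \<Rightarrow> ('a \<times> 'q) set" where
  "reduced_graph V E rk R =
     {e \<in> Gprime V E rk R. \<not> joins_OOU (odds V (Gprime V E rk R)) (unreach V (Gprime V E rk R)) e}"

definition signature :: "('a \<Rightarrow> 'q \<Rightarrow> nat) \<Rightarrow> ('a \<times> 'q) set \<Rightarrow> nat \<Rightarrow> nat" where
  "signature rk M i = card {e \<in> M. case_prod rk e = i}"

definition lex_less :: "(nat \<Rightarrow> nat) \<Rightarrow> (nat \<Rightarrow> nat) \<Rightarrow> bool" where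
  "lex_less s t \<longleftrightarrow> (\<exists>k. (\<forall>i<k. s i = t i) \<and> s k < t k)"

definition rank_maximal :: "('a \<times> 'q) set \<Rightarrow> ('a \<Rightarrow> 'q \<Rightarrow> nat) \<Rightarrow> ('a \<times> 'q) set \<Rightarrow> bool" where
  "rank_maximal E rk M \<longleftrightarrow> M \<subseteq> E \<and> is_matching M \<and>
     \<not> (\<exists>M'. M' \<subseteq> E \<and> is_matching M' \<and> lex_less (signature rk M) (signature rk M'))"

text \<open>Posts of the extended instance: Inl p for an original post p, Inr a for l(a).\<close>
definition ext_posts :: "'a set \<Rightarrow> 'p set \<Rightarrow> ('p + 'a) set" where
  "ext_posts A P = Inl ` P \<union> Inr ` A"

definition ext_edges :: "'a set \<Rightarrow> ('a \<times> 'p) set \<Rightarrow> ('a \<times> ('p + 'a)) set" where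
  "ext_edges A E = {(a, Inl p) | a p. (a,p) \<in> E} \<union> {(a, Inr a) | a. a \<in> A}"

fun ext_rank :: "nat \<Rightarrow> ('a \<Rightarrow> 'p \<Rightarrow> nat) \<Rightarrow> 'a \<Rightarrow> 'p + 'a \<Rightarrow> nat" where
  "ext_rank r rank a (Inl p) = rank a p"
| "ext_rank r rank a (Inr b) = Suc r"

definition partner :: "('a \<times> 'q) set \<Rightarrow> 'q \<Rightarrow> 'a" where
  "partner M p = (THE a. (a,p) \<in> M)"

definition sw_edge :: "('a \<times> 'q) set \<Rightarrow> ('a \<times> 'q) set \<Rightarrow> 'q \<Rightarrow> 'q \<Rightarrow> bool" where
  "sw_edge M Gr p p' \<longleftrightarrow> (\<exists>a. (a,p) \<in> M \<and> (a,p') \<in> Gr)"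

definition sw_weight :: "('a \<Rightarrow> 'q \<Rightarrow> nat) \<Rightarrow> ('a \<times> 'q) set \<Rightarrow> 'q \<Rightarrow> 'q \<Rightarrow> int" where
  "sw_weight rk M p p' = int (rk (partner M p) p') - int (rk (partner M p) p)"

definition inst_vertices :: "'a set \<Rightarrow> 'q set \<Rightarrow> ('a + 'q) set" where
  "inst_vertices A Q = Inl ` A \<union> Inr ` Q"

definition is_sink :: "'a set \<Rightarrow> 'q set \<Rightarrow> ('a \<times> 'q) set \<Rightarrow> ('a \<Rightarrow> 'q \<Rightarrow> nat) \<Rightarrow> nat
    \<Rightarrow> ('a \<times> 'q) set \<Rightarrow> 'q \<Rightarrow> bool" where
  "is_sink A Q E rk R M p \<longleftrightarrow> p \<in> Q \<and>
     (\<forall>p' \<in> Q. \<not> sw_edge M (reduced_graph (inst_vertices A Q) E rk R) p p') \<and>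
     (\<forall>i \<in> {1..R}. Inr p \<in> evens (inst_vertices A Q) (Gprime (inst_vertices A Q) E rk i))"

definition switching_path :: "'a set \<Rightarrow> 'q set \<Rightarrow> ('a \<times> 'q) set \<Rightarrow> ('a \<Rightarrow> 'q \<Rightarrow> nat) \<Rightarrow> nat
    \<Rightarrow> ('a \<times> 'q) set \<Rightarrow> 'q list \<Rightarrow> bool" where
  "switching_path A Q E rk R M T \<longleftrightarrow>
     T \<noteq> [] \<and> distinct T \<and> set T \<subseteq> Q \<and>
     (\<forall>i. Suc i < length T \<longrightarrow>
        sw_edge M (reduced_graph (inst_vertices A Q) E rk R) (T ! i) (T ! Suc i)) \<and>
     is_sink A Q E rk R M (last T) \<and>
     (\<Sum>i < length T - 1. sw_weight rk M (T ! i) (T ! Suc i)) = 0"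

definition switching_cycle :: "'a set \<Rightarrow> 'q set \<Rightarrow> ('a \<times> 'q) set \<Rightarrow> ('a \<Rightarrow> 'q \<Rightarrow> nat) \<Rightarrow> nat
    \<Rightarrow> ('a \<times> 'q) set \<Rightarrow> 'q list \<Rightarrow> bool" where
  "switching_cycle A Q E rk R M C \<longleftrightarrow>
     C \<noteq> [] \<and> distinct C \<and> set C \<subseteq> Q \<and>
     (\<forall>i < length C.
        sw_edge M (reduced_graph (inst_vertices A Q) E rk R) (C ! i) (C ! ((Suc i) mod length C))) \<and>
     (\<Sum>i < length C. sw_weight rk M (C ! i) (C ! ((Suc i) mod length C))) = 0"

definition apply_path :: "('a \<times> 'q) set \<Rightarrow> 'q list \<Rightarrow> ('a \<times> 'q) set" where
  "apply_path M T =
     (M - {(partner M (T ! i), T ! i) | i. Suc i < length T})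
     \<union> {(partner M (T ! i), T ! Suc i) | i. Suc i < length T}"

definition apply_cycle :: "('a \<times> 'q) set \<Rightarrow> 'q list \<Rightarrow> ('a \<times> 'q) set" where
  "apply_cycle M C =
     (M - {(partner M (C ! i), C ! i) | i. i < length C})
     \<union> {(partner M (C ! i), C ! ((Suc i) mod length C)) | i. i < length C}"

end

theory Submission
  imports Defs
begin


definition ends :: "'a \<times> 'q \<Rightarrow> ('a + 'q) set" where
  "ends e = {Inl (fst e), Inr (snd e)}"

lemma uedge_sym: "uedge F u v = uedge F v u"
  by (auto simp: uedge_def split: sum.splits)

lemma ends_eq1: "ends e = {Inl a, Inr b} \<longleftrightarrow> e = (a,b)"
  by (cases e) (auto simp: ends_def doubleton_eq_iff)
lemma ends_eq2: "ends e = {Inr b, Inl a} \<longleftrightarrow> e = (a,b)"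
  by (cases e) (auto simp: ends_def doubleton_eq_iff)
lemma ends_eq3: "ends e \<noteq> {Inl a, Inl b}" "ends e \<noteq> {Inr c, Inr d}"
  by (auto simp: ends_def doubleton_eq_iff)

lemma uedge_iff: "uedge F u v \<longleftrightarrow> (\<exists>e\<in>F. ends e = {u,v})"
  by (cases u; cases v) (auto simp: uedge_def ends_eq1 ends_eq2 ends_eq3)

lemma matched_in_iff: "matched_in N v \<longleftrightarrow> (\<exists>e\<in>N. v \<in> ends e)"
  by (cases v) (force simp: matched_in_def ends_def)+

lemma matching_char: "is_matching N \<longleftrightarrow> (\<forall>e\<in>N. \<forall>e'\<in>N. ends e \<inter> ends e' \<noteq> {} \<longrightarrow> e = e')"
proof
  assume m: "is_matching N"
  show "\<forall>e\<in>N. \<forall>e'\<in>N. ends e \<inter> ends e' \<noteq> {} \<longrightarrow> e = e'"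
  proof (intro ballI impI)
    fix e e' assume e: "e \<in> N" and e': "e' \<in> N" and i: "ends e \<inter> ends e' \<noteq> {}"
    obtain a q a' q' where eq: "e = (a,q)" "e' = (a',q')" by (cases e; cases e')
    have "a = a' \<or> q = q'" using i unfolding eq ends_def by auto
    then show "e = e'" using m e e' unfolding eq is_matching_def by blast
  qed
next
  assume h: "\<forall>e\<in>N. \<forall>e'\<in>N. ends e \<inter> ends e' \<noteq> {} \<longrightarrow> e = e'"
  show "is_matching N" unfolding is_matching_def
  proof (intro allI impI)
    fix a q a' q' assume e: "(a,q) \<in> N" and e': "(a',q') \<in> N"
    have 1: "(a,q) = (a',q')" if "a = a'"
    proof -
      have "Inl a \<in> ends (a,q) \<inter> ends (a',q')" using that by (simp add: ends_def)
      then show ?thesis using h e e' by blast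
    qed
    have 2: "(a,q) = (a',q')" if "q = q'"
    proof -
      have "Inr q \<in> ends (a,q) \<inter> ends (a',q')" using that by (simp add: ends_def)
      then show ?thesis using h e e' by blast
    qed
    show "(a = a') = (q = q')" using 1 2 by auto
  qed
qed

lemma match_share: "is_matching N \<Longrightarrow> e \<in> N \<Longrightarrow> e' \<in> N \<Longrightarrow> v \<in> ends e \<Longrightarrow> v \<in> ends e' \<Longrightarrow> e = e'"
  unfolding matching_char by blast

lemma ends_card2: "ends e = {x, y} \<Longrightarrow> x \<noteq> y"
  by (auto simp: ends_def doubleton_eq_iff)

lemma uedge_N_unique: "is_matching N \<Longrightarrow> uedge N x y \<Longrightarrow> uedge N x z \<Longrightarrow> y = z"
proof -
  assume m: "is_matching N" and "uedge N x y" "uedge N x z"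
  then obtain e e' where e: "e \<in> N" "ends e = {x,y}" and e': "e' \<in> N" "ends e' = {x,z}"
    by (auto simp: uedge_iff)
  have "e = e'" using match_share[OF m e(1) e'(1), of x] e e' by auto
  with e e' ends_card2[OF e(2)] show "y = z" by (auto simp: doubleton_eq_iff)
qed

lemma uedge_isl: "uedge F u v \<Longrightarrow> isl u \<noteq> isl v"
  by (auto simp: uedge_def split: sum.splits)

lemma uedge_matched: "uedge N u v \<Longrightarrow> matched_in N u"
  by (auto simp: uedge_iff matched_in_iff)

lemma uedge_mono: "uedge N u v \<Longrightarrow> N \<subseteq> F \<Longrightarrow> uedge F u v"
  by (auto simp: uedge_iff)

lemma alt_side: "alt_path V F N vs \<Longrightarrow> i < length vs \<Longrightarrow> isl (vs!i) = (isl (vs!0) = even i)"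
proof (induction i)
  case 0 then show ?case by simp
next
  case (Suc i)
  then have "uedge F (vs!i) (vs!Suc i)" by (auto simp: alt_path_def)
  from uedge_isl[OF this] Suc show ?case by auto
qed

lemma alt_prefix: "alt_path V F N vs \<Longrightarrow> j < length vs \<Longrightarrow> alt_path V F N (take (Suc j) vs)"
  unfolding alt_path_def
  by (auto dest: in_set_takeD)

lemma hd_take': "vs \<noteq> [] \<Longrightarrow> hd (take (Suc j) vs) = hd vs"
  by (cases vs) auto

lemma last_take': "j < length vs \<Longrightarrow> last (take (Suc j) vs) = vs ! j"
  by (simp add: take_Suc_conv_app_nth)

lemma alt_snoc:
  assumes "alt_path V F N vs" "v \<in> V" "v \<notin> set vs" "uedge F (last vs) v"
    "uedge N (last vs) v \<longleftrightarrow> odd (length vs - 1)"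
  shows "alt_path V F N (vs @ [v])"
proof -
  have ne: "vs \<noteq> []" using assms(1) by (simp add: alt_path_def)
  have lv: "last vs = vs ! (length vs - 1)" using ne by (simp add: last_conv_nth)
  have "\<forall>i. Suc i < length (vs @ [v]) \<longrightarrow> uedge F ((vs @ [v]) ! i) ((vs @ [v]) ! Suc i) \<and>
        (uedge N ((vs @ [v]) ! i) ((vs @ [v]) ! Suc i)) = odd i"
  proof (intro allI impI)
    fix i assume i: "Suc i < length (vs @ [v])"
    show "uedge F ((vs @ [v]) ! i) ((vs @ [v]) ! Suc i) \<and>
        (uedge N ((vs @ [v]) ! i) ((vs @ [v]) ! Suc i)) = odd i"
    proof (cases "Suc i < length vs")
      case True
      then show ?thesis using assms(1) by (simp add: alt_path_def nth_append)
    next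
      case False
      then have "i = length vs - 1" "Suc i = length vs" using i by auto
      then show ?thesis using assms(4,5) lv by (simp add: nth_append)
    qed
  qed
  then show ?thesis using assms(1,2,3) by (simp add: alt_path_def)
qed

lemma alt_single: "v \<in> V \<Longrightarrow> alt_path V F N [v]"
  by (simp add: alt_path_def)



locale bip =
  fixes V :: "('a + 'q) set" and F :: "('a \<times> 'q) set" and N :: "('a \<times> 'q) set"
  assumes finF: "finite F"
    and inV: "\<And>e. e \<in> F \<Longrightarrow> Inl (fst e) \<in> V \<and> Inr (snd e) \<in> V"
    and mm: "max_matching F N"
begin

lemma NF: "N \<subseteq> F" and Nm: "is_matching N" and Nmax: "\<And>N'. N' \<subseteq> F \<Longrightarrow> is_matching N' \<Longrightarrow> card N' \<le> card N"
  using mm by (auto simp: max_matching_def)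

lemma finN: "finite N" using NF finF finite_subset by blast

lemma uedgeF_V: "uedge F u v \<Longrightarrow> v \<in> V"
  by (cases u; cases v) (auto simp: uedge_def dest: inV)

lemma flip_inv:
  assumes ap: "alt_path V F N vs" and h0: "\<not> matched_in N (vs!0)"
  shows "2*m < length vs \<Longrightarrow> \<exists>N'. is_matching N' \<and> N' \<subseteq> F \<and> card N' = card N \<and>
     (\<forall>v. matched_in N' v \<longrightarrow> matched_in N v \<or> v = vs!0) \<and> \<not> matched_in N' (vs!(2*m)) \<and>
     (\<forall>e\<in>N. (\<forall>i\<le>2*m. vs!i \<notin> ends e) \<longrightarrow> e \<in> N')"
proof (induction m)
  case 0
  show ?case using Nm NF h0 by (intro exI[of _ N]) auto
next
  case (Suc m)
  define L where "L = 2*m"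
  have L2: "2 * Suc m = Suc (Suc L)" unfolding L_def by simp
  have lt: "Suc (Suc L) < length vs" using Suc.prems L2 by simp
  have "2*m < length vs" using lt unfolding L_def by simp
  from Suc.IH[OF this] obtain N' where N': "is_matching N'" "N' \<subseteq> F" "card N' = card N"
    "\<forall>v. matched_in N' v \<longrightarrow> matched_in N v \<or> v = vs!0" "\<not> matched_in N' (vs!L)"
    "\<forall>e\<in>N. (\<forall>i\<le>L. vs!i \<notin> ends e) \<longrightarrow> e \<in> N'"
    unfolding L_def[symmetric] by blast
  have dist: "distinct vs" using ap by (simp add: alt_path_def)
  have AP: "\<And>i. Suc i < length vs \<Longrightarrow> uedge F (vs!i) (vs!Suc i) \<and> (uedge N (vs!i) (vs!Suc i) = odd i)"
    using ap by (simp add: alt_path_def)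
  have eL: "uedge F (vs!L) (vs!Suc L)" "\<not> uedge N (vs!L) (vs!Suc L)"
    using AP[of L, OF Suc_lessD[OF lt]] by (simp_all add: L_def)
  have eL1: "uedge N (vs!Suc L) (vs!Suc (Suc L))"
    using AP[of "Suc L", OF lt] by (simp add: L_def)
  obtain e1 where e1: "e1 \<in> F" "ends e1 = {vs!L, vs!Suc L}" using eL(1) by (auto simp: uedge_iff)
  obtain e2 where e2: "e2 \<in> N" "ends e2 = {vs!Suc L, vs!Suc (Suc L)}" using eL1 by (auto simp: uedge_iff)
  have e1N: "e1 \<notin> N" using eL(2) e1 by (auto simp: uedge_iff)
  have ne: "\<And>i j. i < length vs \<Longrightarrow> j < length vs \<Longrightarrow> i \<noteq> j \<Longrightarrow> vs!i \<noteq> vs!j"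
    using dist by (simp add: nth_eq_iff_index_eq)
  have e2N': "e2 \<in> N'"
  proof -
    have "\<forall>i\<le>L. vs!i \<notin> ends e2"
    proof (intro allI impI)
      fix i assume "i \<le> L"
      then show "vs!i \<notin> ends e2" using e2(2) ne[of i "Suc L"] ne[of i "Suc (Suc L)"] lt by auto
    qed
    then show ?thesis using N'(6) e2(1) by blast
  qed
  have e1N': "e1 \<notin> N'" using N'(5) e1 by (auto simp: matched_in_iff)
  define N'' where "N'' = insert e1 (N' - {e2})"
  have finN': "finite N'" using N'(2) finF finite_subset by blast
  have m'': "is_matching N''"
    unfolding matching_char N''_def
  proof (intro ballI impI)
    fix x y assume x: "x \<in> insert e1 (N' - {e2})" and y: "y \<in> insert e1 (N' - {e2})"
      and xy: "ends x \<inter> ends y \<noteq> {}"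
    have aux: "\<And>z. z \<in> N' - {e2} \<Longrightarrow> ends e1 \<inter> ends z = {}"
    proof -
      fix z assume z: "z \<in> N' - {e2}"
      have "vs!L \<notin> ends z" using N'(5) z by (auto simp: matched_in_iff)
      moreover have "vs!Suc L \<notin> ends z"
        using match_share[OF N'(1) e2N', of z "vs!Suc L"] z e2(2) by auto
      ultimately show "ends e1 \<inter> ends z = {}" using e1(2) by auto
    qed
    show "x = y"
    proof (cases "x = e1")
      case True
      then show ?thesis using y xy aux by (metis DiffI insertE singletonD)
    next
      case False
      then have xN: "x \<in> N' - {e2}" using x by auto
      show ?thesis
      proof (cases "y = e1")
        case True then show ?thesis using aux[OF xN] xy by auto
      next
        case False
        then have "y \<in> N' - {e2}" using y by auto
        then show ?thesis using xN xy N'(1) unfolding matching_char by blast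
      qed
    qed
  qed
  have c1: "card (N' - {e2}) = card N' - 1" using finN' e2N' by (simp add: card_Diff_singleton)
  have c2: "card N' > 0" using finN' e2N' card_gt_0_iff by blast
  have c'': "card N'' = card N"
    unfolding N''_def using finN' e1N' N'(3) c1 c2 by simp
  have L0: "matched_in N (vs!L) \<or> vs!L = vs!0"
  proof (cases "L = 0")
    case True then show ?thesis by simp
  next
    case False
    then have "odd (L - 1)" "Suc (L - 1) = L" unfolding L_def by auto
    then have "uedge N (vs!(L-1)) (vs!L)" using AP[of "L - 1"] lt by simp
    then have "uedge N (vs!L) (vs!(L-1))" using uedge_sym by metis
    then show ?thesis using uedge_matched by blast
  qed
  have p4: "\<forall>v. matched_in N'' v \<longrightarrow> matched_in N v \<or> v = vs!0"
  proof (intro allI impI)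
    fix v assume "matched_in N'' v"
    then obtain z where z: "z \<in> N''" "v \<in> ends z" by (auto simp: matched_in_iff)
    show "matched_in N v \<or> v = vs!0"
    proof (cases "z = e1")
      case True
      then have "v = vs!L \<or> v = vs!Suc L" using z e1 by auto
      then show ?thesis using L0 e2 by (auto simp: matched_in_iff)
    next
      case False
      then have "z \<in> N'" using z unfolding N''_def by auto
      then show ?thesis using N'(4) z(2) by (auto simp: matched_in_iff)
    qed
  qed
  have p5: "\<not> matched_in N'' (vs!Suc (Suc L))"
  proof
    assume "matched_in N'' (vs!Suc (Suc L))"
    then obtain z where z: "z \<in> N''" "vs!Suc (Suc L) \<in> ends z" by (auto simp: matched_in_iff)
    show False
    proof (cases "z = e1")
      case True
      then show False using z e1(2) ne[of "Suc (Suc L)" L] ne[of "Suc (Suc L)" "Suc L"] lt by auto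
    next
      case False
      then have "z \<in> N' - {e2}" using z unfolding N''_def by auto
      then show False using match_share[OF N'(1) e2N', of z] z e2(2) by auto
    qed
  qed
  have p6: "\<forall>e\<in>N. (\<forall>i\<le>Suc (Suc L). vs!i \<notin> ends e) \<longrightarrow> e \<in> N''"
  proof (intro ballI impI)
    fix e assume e: "e \<in> N" "\<forall>i\<le>Suc (Suc L). vs!i \<notin> ends e"
    then have "e \<in> N'" using N'(6) by auto
    moreover have "e \<noteq> e2" using e(2) e2(2) by auto
    ultimately show "e \<in> N''" unfolding N''_def by auto
  qed
  have "N'' \<subseteq> F" unfolding N''_def using N'(2) e1(1) by auto
  then have R: "is_matching N'' \<and> N'' \<subseteq> F \<and> card N'' = card N \<and>
     (\<forall>v. matched_in N'' v \<longrightarrow> matched_in N v \<or> v = vs!0) \<and> \<not> matched_in N'' (vs!(Suc (Suc L))) \<and>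
     (\<forall>e\<in>N. (\<forall>i\<le>Suc (Suc L). vs!i \<notin> ends e) \<longrightarrow> e \<in> N'')"
    using m'' c'' p4 p5 p6 by (intro conjI)
  show ?case unfolding L2 using R by (rule exI)
qed

lemma aug_contra:
  assumes ap: "alt_path V F N vs" and h0: "\<not> matched_in N (hd vs)"
    and hl: "\<not> matched_in N (last vs)" and od: "odd (length vs - 1)"
  shows False
proof -
  have ne: "vs \<noteq> []" and dist: "distinct vs" using ap by (auto simp: alt_path_def)
  have h0': "\<not> matched_in N (vs!0)" using h0 ne by (simp add: hd_conv_nth)
  define L where "L = length vs - 2"
  have evL: "even L" using od unfolding L_def by (cases "length vs") auto
  obtain m where m: "L = 2*m" using evL by (auto elim: evenE)
  have lt: "Suc L < length vs" and L1: "Suc L = length vs - 1" using od unfolding L_def by (cases "length vs"; auto)+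
  from flip_inv[OF ap h0', of m] m lt obtain N' where N': "is_matching N'" "N' \<subseteq> F" "card N' = card N"
    "\<forall>v. matched_in N' v \<longrightarrow> matched_in N v \<or> v = vs!0" "\<not> matched_in N' (vs!L)" by auto
  have eL: "uedge F (vs!L) (vs!Suc L)"
    using ap lt unfolding alt_path_def by blast
  obtain e1 where e1: "e1 \<in> F" "ends e1 = {vs!L, vs!Suc L}" using eL by (auto simp: uedge_iff)
  have last: "vs!Suc L = last vs" using L1 ne by (simp add: last_conv_nth)
  have n0: "vs!Suc L \<noteq> vs!0" using nth_eq_iff_index_eq[OF dist lt, of 0] lt ne by simp
  have um: "\<not> matched_in N' (vs!Suc L)" using N'(4) hl last n0 by auto
  have e1N': "e1 \<notin> N'" using N'(5) e1 by (auto simp: matched_in_iff)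
  have "is_matching (insert e1 N')"
    unfolding matching_char
  proof (intro ballI impI)
    fix x y assume x: "x \<in> insert e1 N'" and y: "y \<in> insert e1 N'" and xy: "ends x \<inter> ends y \<noteq> {}"
    have aux: "\<And>z. z \<in> N' \<Longrightarrow> ends e1 \<inter> ends z = {}"
      using N'(5) um e1(2) by (auto simp: matched_in_iff)
    show "x = y" using x y xy aux N'(1) unfolding matching_char by (metis Int_commute insertE)
  qed
  moreover have "insert e1 N' \<subseteq> F" using N'(2) e1 by auto
  ultimately have "card (insert e1 N') \<le> card N" using Nmax by blast
  moreover have "finite N'" using N'(2) finF finite_subset by blast
  ultimately show False using e1N' N'(3) by simp
qed

end


context bip begin

abbreviation "Evs \<equiv> even_wrt V F N"
abbreviation "Ods \<equiv> odd_wrt V F N"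
abbreviation "Uns \<equiv> V - Evs - Ods"

lemma last_nth': "vs \<noteq> [] \<Longrightarrow> last vs = vs ! (length vs - 1)"
  by (simp add: last_conv_nth)

lemma unmatched_even: "v \<in> V \<Longrightarrow> \<not> matched_in N v \<Longrightarrow> v \<in> Evs"
  unfolding even_wrt_def using alt_single[of v V F N] by (intro CollectI conjI exI[of _ "[v]"]) auto

lemma odd_matched: "v \<in> Ods \<Longrightarrow> matched_in N v"
  unfolding odd_wrt_def using aug_contra by blast

lemma prefix_class:
  assumes ap: "alt_path V F N vs" and h: "\<not> matched_in N (hd vs)" and j: "j < length vs"
  shows "even j \<Longrightarrow> vs!j \<in> Evs" "odd j \<Longrightarrow> vs!j \<in> Ods"
proof -
  have ap': "alt_path V F N (take (Suc j) vs)" using alt_prefix[OF ap j] .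
  have ne: "vs \<noteq> []" using ap by (simp add: alt_path_def)
  have hd': "hd (take (Suc j) vs) = hd vs" using hd_take'[OF ne] .
  have l: "last (take (Suc j) vs) = vs!j" using last_take'[OF j] .
  have len: "length (take (Suc j) vs) - 1 = j" using j by simp
  have V: "vs!j \<in> V" using ap j by (auto simp: alt_path_def)
  have h': "\<not> matched_in N (hd (take (Suc j) vs))" using h hd' by simp
  show "even j \<Longrightarrow> vs!j \<in> Evs" unfolding even_wrt_def using ap' h' l len V by (metis (mono_tags, lifting) CollectI)
  show "odd j \<Longrightarrow> vs!j \<in> Ods" unfolding odd_wrt_def using ap' h' l len V by (metis (mono_tags, lifting) CollectI)
qed

lemma even_nbr:
  assumes x: "x \<in> Evs" and xy: "uedge F x y" shows "y \<in> Ods"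
proof -
  from x obtain vs where ap: "alt_path V F N vs" and h: "\<not> matched_in N (hd vs)"
    and lx: "last vs = x" and ev: "even (length vs - 1)"
    unfolding even_wrt_def by auto
  define L where "L = length vs - 1"
  have ne: "vs \<noteq> []" using ap by (simp add: alt_path_def)
  have xL: "vs!L = x" using lx ne unfolding L_def by (simp add: last_conv_nth)
  have Llt: "L < length vs" using ne unfolding L_def by simp
  have yV: "y \<in> V" using uedgeF_V[OF xy] .
  show ?thesis
  proof (cases "y \<in> set vs")
    case True
    then obtain j where j: "j < length vs" "vs!j = y" by (auto simp: in_set_conv_nth)
    have "isl (vs!j) = (isl (vs!0) = even j)" using alt_side[OF ap j(1)] .
    moreover have "isl (vs!L) = (isl (vs!0) = even L)" using alt_side[OF ap Llt] .
    moreover have "isl x \<noteq> isl y" using uedge_isl[OF xy] .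
    ultimately have "odd j" using j xL ev unfolding L_def by auto
    then show ?thesis using prefix_class(2)[OF ap h j(1)] j by simp
  next
    case False
    have nN: "\<not> uedge N x y"
    proof
      assume N: "uedge N x y"
      show False
      proof (cases "L = 0")
        case True
        then have "x = hd vs" using xL ne by (simp add: hd_conv_nth)
        then show False using h uedge_matched[OF N] by simp
      next
        case False
        then have "odd (L - 1)" "Suc (L - 1) = L" using ev unfolding L_def by auto
        then have "uedge N (vs!(L-1)) (vs!L)" using ap Llt unfolding alt_path_def by metis
        then have "uedge N x (vs!(L-1))" using uedge_sym xL by metis
        then have "y = vs!(L-1)" using uedge_N_unique[OF Nm N] by simp
        then show False using \<open>y \<notin> set vs\<close> Llt by auto
      qed
    qed
    have ap2: "alt_path V F N (vs @ [y])"
      using alt_snoc[OF ap yV False] xy nN lx ev by simp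
    have "hd (vs @ [y]) = hd vs" using ne by simp
    moreover have "last (vs @ [y]) = y" by simp
    moreover have "odd (length (vs @ [y]) - 1)" using ev ne by simp
    ultimately show ?thesis unfolding odd_wrt_def using ap2 h yV by (metis (mono_tags, lifting) CollectI)
  qed
qed

lemma odd_Nnbr:
  assumes x: "x \<in> Ods" and xy: "uedge N x y" shows "y \<in> Evs"
proof -
  from x obtain vs where ap: "alt_path V F N vs" and h: "\<not> matched_in N (hd vs)"
    and lx: "last vs = x" and od: "odd (length vs - 1)"
    unfolding odd_wrt_def by auto
  define L where "L = length vs - 1"
  have ne: "vs \<noteq> []" using ap by (simp add: alt_path_def)
  have xL: "vs!L = x" using lx ne unfolding L_def by (simp add: last_conv_nth)
  have Llt: "L < length vs" using ne unfolding L_def by simp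
  have xyF: "uedge F x y" using uedge_mono[OF xy NF] .
  have yV: "y \<in> V" using uedgeF_V[OF xyF] .
  show ?thesis
  proof (cases "y \<in> set vs")
    case True
    then obtain j where j: "j < length vs" "vs!j = y" by (auto simp: in_set_conv_nth)
    have "isl (vs!j) = (isl (vs!0) = even j)" using alt_side[OF ap j(1)] .
    moreover have "isl (vs!L) = (isl (vs!0) = even L)" using alt_side[OF ap Llt] .
    moreover have "isl x \<noteq> isl y" using uedge_isl[OF xy] .
    ultimately have "even j" using j xL od unfolding L_def by auto
    then show ?thesis using prefix_class(1)[OF ap h j(1)] j by simp
  next
    case False
    have ap2: "alt_path V F N (vs @ [y])"
      using alt_snoc[OF ap yV False] xyF xy lx od by simp
    have "hd (vs @ [y]) = hd vs" using ne by simp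
    moreover have "last (vs @ [y]) = y" by simp
    moreover have "even (length (vs @ [y]) - 1)" using od ne by simp
    ultimately show ?thesis unfolding even_wrt_def using ap2 h yV by (metis (mono_tags, lifting) CollectI)
  qed
qed

lemma EO_disj: "Evs \<inter> Ods = {}"
proof (rule ccontr)
  assume "Evs \<inter> Ods \<noteq> {}"
  then obtain x where "x \<in> Evs" "x \<in> Ods" by auto
  then obtain P Q where P: "alt_path V F N P" "\<not> matched_in N (hd P)" "last P = x" "even (length P - 1)"
    and Q: "alt_path V F N Q" "\<not> matched_in N (hd Q)" "last Q = x" "odd (length Q - 1)"
    unfolding even_wrt_def odd_wrt_def by auto
  have neP: "P \<noteq> []" and dP: "distinct P" using P(1) by (auto simp: alt_path_def)
  have neQ: "Q \<noteq> []" and dQ: "distinct Q" using Q(1) by (auto simp: alt_path_def)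
  define n where "n = length P - 1"
  define m where "m = length Q - 1"
  have xn: "P!n = x" using P(3) neP unfolding n_def by (simp add: last_conv_nth)
  have xm: "Q!m = x" using Q(3) neQ unfolding m_def by (simp add: last_conv_nth)
  have nlt: "n < length P" using neP unfolding n_def by simp
  have mlt: "m < length Q" using neQ unfolding m_def by simp
  define k where "k = (LEAST k. k < length P \<and> P!k \<in> set Q)"
  have exk: "n < length P \<and> P!n \<in> set Q" using nlt xn mlt xm by (metis nth_mem)
  have k: "k < length P" "P!k \<in> set Q" using LeastI[of "\<lambda>k. k < length P \<and> P!k \<in> set Q", OF exk]
    unfolding k_def by auto
  have kmin: "\<And>i. i < k \<Longrightarrow> P!i \<notin> set Q"
  proof -
    fix i assume i: "i < k"
    have "\<not> (i < length P \<and> P!i \<in> set Q)" using not_less_Least[of i] i unfolding k_def by blast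
    then show "P!i \<notin> set Q" using i k(1) by auto
  qed
  obtain l where l: "l < length Q" "Q!l = P!k" using k(2) by (metis in_set_conv_nth)
  have s1: "isl (P!k) = (isl (P!0) = even k)" using alt_side[OF P(1) k(1)] .
  have s2: "isl (Q!l) = (isl (Q!0) = even l)" using alt_side[OF Q(1) l(1)] .
  have s3: "isl (P!n) = (isl (P!0) = even n)" using alt_side[OF P(1) nlt] .
  have s4: "isl (Q!m) = (isl (Q!0) = even m)" using alt_side[OF Q(1) mlt] .
  have kl: "odd (k + l)" using s1 s2 s3 s4 xn xm l(2) P(4) Q(4) unfolding n_def m_def by auto
  define R where "R = take (Suc k) P @ rev (take l Q)"
  have lenR: "length R = Suc k + l" unfolding R_def using k(1) l(1) by simp
  have R1: "\<And>i. i \<le> k \<Longrightarrow> R!i = P!i" unfolding R_def using k(1) by (simp add: nth_append)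
  have R2: "\<And>i. k \<le> i \<Longrightarrow> i \<le> k + l \<Longrightarrow> R!i = Q!(l - (i - k))"
  proof -
    fix i assume i: "k \<le> i" "i \<le> k + l"
    show "R!i = Q!(l - (i - k))"
    proof (cases "i = k")
      case True then show ?thesis using R1 l(2) by simp
    next
      case False
      then have "i - Suc k < l" using i by simp
      then show ?thesis unfolding R_def using k(1) l(1) i False
        by (simp add: nth_append rev_nth)
    qed
  qed
  have apR: "alt_path V F N R"
    unfolding alt_path_def
  proof (intro conjI allI impI)
    show "R \<noteq> []" using lenR by auto
    have disj: "set (take (Suc k) P) \<inter> set (take l Q) = {}"
    proof (rule ccontr)
      assume "set (take (Suc k) P) \<inter> set (take l Q) \<noteq> {}"
      then obtain z where z1: "z \<in> set (take (Suc k) P)" and z2: "z \<in> set (take l Q)" by auto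
      from z1 obtain i where i: "i < Suc k" "P!i = z" using k(1)
        by (auto simp: in_set_conv_nth)
      from z2 obtain j where j: "j < l" "Q!j = z" using l(1)
        by (auto simp: in_set_conv_nth)
      show False
      proof (cases "i < k")
        case True
        then show False using kmin[OF True] i j l(1) by (metis nth_mem order.strict_trans)
      next
        case False
        then have "i = k" using i by simp
        then have "Q!j = Q!l" using i j l by simp
        then show False using dQ j l(1) by (simp add: nth_eq_iff_index_eq)
      qed
    qed
    show "distinct R" unfolding R_def using dP dQ disj by simp
    show "set R \<subseteq> V" unfolding R_def using P(1) Q(1)
      by (auto simp: alt_path_def dest: in_set_takeD)
  next
    fix i assume i: "Suc i < length R"
    show "uedge F (R!i) (R!Suc i)"
    proof (cases "Suc i \<le> k")
      case True
      then show ?thesis using R1[of i] R1[of "Suc i"] P(1) k(1) by (simp add: alt_path_def)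
    next
      case False
      define j where "j = l - (Suc i - k)"
      have j1: "Suc j = l - (i - k)" using False i lenR unfolding j_def by simp
      have "R!i = Q!Suc j" using R2[of i] False i lenR j1 by simp
      moreover have "R!Suc i = Q!j" using R2[of "Suc i"] False i lenR unfolding j_def by simp
      moreover have "Suc j < length Q" using j1 l(1) by simp
      ultimately show ?thesis using Q(1) uedge_sym by (metis alt_path_def)
    qed
  next
    fix i assume i: "Suc i < length R"
    show "uedge N (R!i) (R!Suc i) = odd i"
    proof (cases "Suc i \<le> k")
      case True
      then show ?thesis using R1[of i] R1[of "Suc i"] P(1) k(1) by (simp add: alt_path_def)
    next
      case False
      define j where "j = l - (Suc i - k)"
      have j1: "Suc j = l - (i - k)" using False i lenR unfolding j_def by simp
      have "R!i = Q!Suc j" using R2[of i] False i lenR j1 by simp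
      moreover have "R!Suc i = Q!j" using R2[of "Suc i"] False i lenR unfolding j_def by simp
      moreover have "Suc j < length Q" using j1 l(1) by simp
      moreover have "odd j = odd i"
      proof -
        have "j + i + 1 = l + k" using j1 False i lenR by simp
        then show ?thesis using kl by presburger
      qed
      ultimately show ?thesis using Q(1) uedge_sym by (metis alt_path_def)
    qed
  qed
  have hR: "hd R = hd P" unfolding R_def using neP by (cases P) auto
  have lR: "last R = hd Q"
  proof -
    have "last R = R!(k+l)" using lenR last_conv_nth[of R] by fastforce
    also have "\<dots> = Q!0" using R2[of "k+l"] by simp
    finally show ?thesis using neQ by (simp add: hd_conv_nth)
  qed
  show False using aug_contra[OF apR] hR lR P(2) Q(2) kl lenR by simp
qed

end


lemma cover_bound:
  assumes fC: "finite C" and m: "is_matching Y" and cov: "\<forall>e\<in>Y. ends e \<inter> C \<noteq> {}"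
  shows "card Y \<le> card C"
proof -
  define f where "f e = (SOME c. c \<in> ends e \<inter> C)" for e
  have f: "f e \<in> ends e \<inter> C" if "e \<in> Y" for e
  proof -
    have "\<exists>c. c \<in> ends e \<inter> C" using cov that by blast
    then show ?thesis unfolding f_def by (rule someI_ex)
  qed
  have "inj_on f Y"
  proof (rule inj_onI)
    fix e e' assume "e \<in> Y" "e' \<in> Y" "f e = f e'"
    then show "e = e'" using f match_share[OF m] by (metis IntD1)
  qed
  moreover have "f ` Y \<subseteq> C" using f by auto
  ultimately show ?thesis using card_inj_on_le fC by blast
qed

lemma inj_bound:
  assumes fS: "finite S" and h: "\<forall>c\<in>C. \<exists>e\<in>S. c \<in> ends e \<and> ends e \<inter> C = {c}"
  shows "card C \<le> card S"
proof -
  define g where "g c = (SOME e. e \<in> S \<and> c \<in> ends e \<and> ends e \<inter> C = {c})" for c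
  have g: "g c \<in> S \<and> c \<in> ends (g c) \<and> ends (g c) \<inter> C = {c}" if c: "c \<in> C" for c
  proof -
    have "\<exists>e. e \<in> S \<and> c \<in> ends e \<and> ends e \<inter> C = {c}" using h c by blast
    then show ?thesis unfolding g_def by (rule someI_ex)
  qed
  have "inj_on g C"
  proof (rule inj_onI)
    fix c c' assume c: "c \<in> C" "c' \<in> C" "g c = g c'"
    have "c' \<in> ends (g c')" using g[OF c(2)] by blast
    then have "c' \<in> ends (g c) \<inter> C" using c by simp
    then show "c = c'" using g[OF c(1)] by (metis singletonD)
  qed
  moreover have "g ` C \<subseteq> S" using g by auto
  ultimately show ?thesis using card_inj_on_le fS by blast
qed

lemma saturate:
  assumes fC: "finite C" and m: "is_matching Y" and fY: "finite Y"
    and cov: "\<forall>e\<in>Y. ends e \<inter> C \<noteq> {}" and le: "card C \<le> card Y"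
  shows "\<forall>c\<in>C. \<exists>e\<in>Y. c \<in> ends e" "\<forall>e\<in>Y. \<forall>c\<in>ends e \<inter> C. \<forall>c'\<in>ends e \<inter> C. c = c'"
proof -
  define f where "f e = (SOME c. c \<in> ends e \<inter> C)" for e
  have f: "f e \<in> ends e \<inter> C" if "e \<in> Y" for e
  proof -
    have "\<exists>c. c \<in> ends e \<inter> C" using cov that by blast
    then show ?thesis unfolding f_def by (rule someI_ex)
  qed
  have inj: "inj_on f Y"
  proof (rule inj_onI)
    fix e e' assume "e \<in> Y" "e' \<in> Y" "f e = f e'"
    then show "e = e'" using f match_share[OF m] by (metis IntD1)
  qed
  have sub: "f ` Y \<subseteq> C" using f by auto
  have "card (f ` Y) = card Y" using card_image[OF inj] .
  then have eq: "f ` Y = C" using card_seteq[OF fC sub] le by simp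
  show "\<forall>c\<in>C. \<exists>e\<in>Y. c \<in> ends e" using eq f by blast
  have uq: "\<And>e c. e \<in> Y \<Longrightarrow> c \<in> ends e \<inter> C \<Longrightarrow> c = f e"
  proof -
    fix e c assume e: "e \<in> Y" and c: "c \<in> ends e \<inter> C"
    then obtain e' where e': "e' \<in> Y" "c = f e'" using eq by blast
    then have "c \<in> ends e'" using f by blast
    then have "e = e'" using match_share[OF m e e'(1)] c by blast
    then show "c = f e" using e' by simp
  qed
  show "\<forall>e\<in>Y. \<forall>c\<in>ends e \<inter> C. \<forall>c'\<in>ends e \<inter> C. c = c'" using uq by metis
qed

lemma uniq_C:
  assumes "\<not> joins_OOU Os Us e" "c \<in> ends e" "c \<in> Os \<union> (Us \<inter> range Inl)"
  shows "ends e \<inter> (Os \<union> (Us \<inter> range Inl)) = {c}"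
  using assms by (cases e) (auto simp: joins_OOU_def ends_def)

locale bipV = bip +
  assumes finV: "finite V"
begin

definition "CA = Ods \<union> (Uns \<inter> range Inl)"
definition "CQ = Ods \<union> (Uns \<inter> range Inr)"

lemma finCA: "finite CA" and finCQ: "finite CQ"
  unfolding CA_def CQ_def odd_wrt_def using finV by auto

lemma CA_cover: "\<forall>e\<in>F. ends e \<inter> CA \<noteq> {}"
proof
  fix e assume e: "e \<in> F"
  obtain a q where eq: "e = (a,q)" by (cases e)
  have aV: "Inl a \<in> V" using inV[OF e] eq by simp
  have "Inl a \<in> CA \<or> Inr q \<in> CA"
  proof (cases "Inl a \<in> Evs")
    case True
    have "uedge F (Inl a) (Inr q)" using e eq by (simp add: uedge_def)
    then have "Inr q \<in> Ods" using even_nbr[OF True] by simp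
    then show ?thesis unfolding CA_def by simp
  next
    case False then show ?thesis using aV unfolding CA_def by auto
  qed
  then show "ends e \<inter> CA \<noteq> {}" unfolding eq ends_def by auto
qed

lemma CQ_cover: "\<forall>e\<in>F. ends e \<inter> CQ \<noteq> {}"
proof
  fix e assume e: "e \<in> F"
  obtain a q where eq: "e = (a,q)" by (cases e)
  have qV: "Inr q \<in> V" using inV[OF e] eq by simp
  have "Inl a \<in> CQ \<or> Inr q \<in> CQ"
  proof (cases "Inr q \<in> Evs")
    case True
    have "uedge F (Inr q) (Inl a)" using e eq by (simp add: uedge_def)
    then have "Inl a \<in> Ods" using even_nbr[OF True] by simp
    then show ?thesis unfolding CQ_def by simp
  next
    case False then show ?thesis using qV unfolding CQ_def by auto
  qed
  then show "ends e \<inter> CQ \<noteq> {}" unfolding eq ends_def by auto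
qed

lemma C_matched: "v \<in> Ods \<union> Uns \<Longrightarrow> matched_in N v"
  using odd_matched unmatched_even by blast

lemma N_CA: "e \<in> N \<Longrightarrow> Inl (fst e) \<in> CA \<Longrightarrow> Inr (snd e) \<in> CA \<Longrightarrow> False"
proof -
  assume e: "e \<in> N" and a: "Inl (fst e) \<in> CA" and q: "Inr (snd e) \<in> CA"
  have "Inr (snd e) \<in> Ods" using q unfolding CA_def by auto
  moreover have "uedge N (Inr (snd e)) (Inl (fst e))" using e by (cases e) (simp add: uedge_def)
  ultimately have "Inl (fst e) \<in> Evs" using odd_Nnbr by blast
  then show False using a EO_disj unfolding CA_def by auto
qed

lemma N_CQ: "e \<in> N \<Longrightarrow> Inl (fst e) \<in> CQ \<Longrightarrow> Inr (snd e) \<in> CQ \<Longrightarrow> False"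
proof -
  assume e: "e \<in> N" and a: "Inl (fst e) \<in> CQ" and q: "Inr (snd e) \<in> CQ"
  have "Inl (fst e) \<in> Ods" using a unfolding CQ_def by auto
  moreover have "uedge N (Inl (fst e)) (Inr (snd e))" using e by (cases e) (simp add: uedge_def)
  ultimately have "Inr (snd e) \<in> Evs" using odd_Nnbr by blast
  then show False using q EO_disj unfolding CQ_def by auto
qed

lemma CA_le_N: "card CA \<le> card N"
proof (rule inj_bound[OF finN])
  show "\<forall>c\<in>CA. \<exists>e\<in>N. c \<in> ends e \<and> ends e \<inter> CA = {c}"
  proof
    fix c assume c: "c \<in> CA"
    then have "matched_in N c" using C_matched unfolding CA_def by blast
    then obtain e where e: "e \<in> N" "c \<in> ends e" by (auto simp: matched_in_iff)
    have "ends e \<inter> CA = {c}"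
    proof -
      have "\<not> (Inl (fst e) \<in> CA \<and> Inr (snd e) \<in> CA)" using N_CA e(1) by blast
      then show ?thesis using c e(2) unfolding ends_def by auto
    qed
    then show "\<exists>e\<in>N. c \<in> ends e \<and> ends e \<inter> CA = {c}" using e by blast
  qed
qed

lemma CQ_le_N: "card CQ \<le> card N"
proof (rule inj_bound[OF finN])
  show "\<forall>c\<in>CQ. \<exists>e\<in>N. c \<in> ends e \<and> ends e \<inter> CQ = {c}"
  proof
    fix c assume c: "c \<in> CQ"
    then have "matched_in N c" using C_matched unfolding CQ_def by blast
    then obtain e where e: "e \<in> N" "c \<in> ends e" by (auto simp: matched_in_iff)
    have "ends e \<inter> CQ = {c}"
    proof -
      have "\<not> (Inl (fst e) \<in> CQ \<and> Inr (snd e) \<in> CQ)" using N_CQ e(1) by blast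
      then show ?thesis using c e(2) unfolding ends_def by auto
    qed
    then show "\<exists>e\<in>N. c \<in> ends e \<and> ends e \<inter> CQ = {c}" using e by blast
  qed
qed

lemma matching_le_CA: "X \<subseteq> F \<Longrightarrow> is_matching X \<Longrightarrow> card X \<le> card CA"
  using cover_bound[OF finCA] CA_cover by blast

lemma GE_max:
  assumes YF: "Y \<subseteq> F" and mY: "is_matching Y" and le: "card N \<le> card Y"
  shows "\<forall>v\<in>Ods \<union> Uns. matched_in Y v" "\<forall>e\<in>Y. \<not> joins_OOU Ods Uns e"
proof -
  have fY: "finite Y" using YF finF finite_subset by blast
  have cA: "\<forall>e\<in>Y. ends e \<inter> CA \<noteq> {}" using CA_cover YF by blast
  have cQ: "\<forall>e\<in>Y. ends e \<inter> CQ \<noteq> {}" using CQ_cover YF by blast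
  have sA: "\<forall>c\<in>CA. \<exists>e\<in>Y. c \<in> ends e" "\<forall>e\<in>Y. \<forall>c\<in>ends e \<inter> CA. \<forall>c'\<in>ends e \<inter> CA. c = c'"
    using saturate[OF finCA mY fY cA] CA_le_N le by auto
  have sQ: "\<forall>c\<in>CQ. \<exists>e\<in>Y. c \<in> ends e" "\<forall>e\<in>Y. \<forall>c\<in>ends e \<inter> CQ. \<forall>c'\<in>ends e \<inter> CQ. c = c'"
    using saturate[OF finCQ mY fY cQ] CQ_le_N le by auto
  show "\<forall>v\<in>Ods \<union> Uns. matched_in Y v"
  proof
    fix v assume v: "v \<in> Ods \<union> Uns"
    have "v \<in> CA \<or> v \<in> CQ" using v unfolding CA_def CQ_def by (cases v) auto
    then show "matched_in Y v" using sA(1) sQ(1) by (auto simp: matched_in_iff)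
  qed
  show "\<forall>e\<in>Y. \<not> joins_OOU Ods Uns e"
  proof
    fix e assume e: "e \<in> Y"
    have ne: "Inl (fst e) \<noteq> Inr (snd e)" by simp
    have inA: "Inl (fst e) \<in> ends e" "Inr (snd e) \<in> ends e" unfolding ends_def by auto
    have nA: "\<not> (Inl (fst e) \<in> CA \<and> Inr (snd e) \<in> CA)" using sA(2) e inA ne by blast
    have nQ: "\<not> (Inl (fst e) \<in> CQ \<and> Inr (snd e) \<in> CQ)" using sQ(2) e inA ne by blast
    show "\<not> joins_OOU Ods Uns e" using nA nQ unfolding joins_OOU_def CA_def CQ_def by auto
  qed
qed

end


lemma m_sub: "is_matching M \<Longrightarrow> M' \<subseteq> M \<Longrightarrow> is_matching M'"
  unfolding is_matching_def by blast

lemma m_fst: "is_matching M \<Longrightarrow> (a,q) \<in> M \<Longrightarrow> (a,q') \<in> M \<Longrightarrow> q = q'"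
  unfolding is_matching_def by blast

lemma m_snd: "is_matching M \<Longrightarrow> (a,q) \<in> M \<Longrightarrow> (a',q) \<in> M \<Longrightarrow> a = a'"
  unfolding is_matching_def by blast

lemma m_insert: "is_matching M \<Longrightarrow> a \<notin> fst ` M \<Longrightarrow> q \<notin> snd ` M \<Longrightarrow> is_matching (insert (a,q) M)"
  unfolding is_matching_def by (auto simp: image_iff)

lemma card_fst: "is_matching M \<Longrightarrow> card (fst ` M) = card M"
proof -
  assume m: "is_matching M"
  have "inj_on fst M"
    by (rule inj_onI) (metis m m_fst prod.collapse)
  then show ?thesis by (rule card_image)
qed

lemma aug_fin:
  assumes mY: "is_matching Y" and fY: "finite Y" and f: "(a',q) \<in> Y"
    and mZ: "is_matching Z1" and fZ: "finite Z1" and sub: "Z1 \<subseteq> W \<union> (Y - {(a',q)})"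
    and aW: "a' \<notin> fst ` W" and qW: "q \<notin> snd ` W"
    and c: "card (Y - {(a',q)}) < card Z1"
    and cf: "fst ` (Y - {(a',q)}) \<subseteq> fst ` Z1" and cs: "snd ` (Y - {(a',q)}) \<subseteq> snd ` Z1"
  shows "is_matching (insert (a',q) Z1) \<and> card Y < card (insert (a',q) Z1) \<and>
      fst ` Y \<subseteq> fst ` (insert (a',q) Z1) \<and> snd ` Y \<subseteq> snd ` (insert (a',q) Z1)"
proof -
  have a1: "a' \<notin> fst ` Z1"
  proof
    assume "a' \<in> fst ` Z1"
    then obtain q'' where "(a',q'') \<in> Z1" by force
    then have "(a',q'') \<in> W \<or> (a',q'') \<in> Y - {(a',q)}" using sub by auto
    then show False
    proof
      assume "(a',q'') \<in> W" then show False using aW by force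
    next
      assume "(a',q'') \<in> Y - {(a',q)}" then show False using m_fst[OF mY f] by blast
    qed
  qed
  have q1: "q \<notin> snd ` Z1"
  proof
    assume "q \<in> snd ` Z1"
    then obtain a'' where "(a'',q) \<in> Z1" by force
    then have "(a'',q) \<in> W \<or> (a'',q) \<in> Y - {(a',q)}" using sub by auto
    then show False
    proof
      assume "(a'',q) \<in> W" then show False using qW by force
    next
      assume "(a'',q) \<in> Y - {(a',q)}" then show False using m_snd[OF mY f] by blast
    qed
  qed
  have "(a',q) \<notin> Z1" using a1 by force
  then have "card (insert (a',q) Z1) = Suc (card Z1)" using fZ by simp
  moreover have "card (Y - {(a',q)}) = card Y - 1" using fY f by simp
  moreover have "card Y > 0" using fY f card_gt_0_iff by blast
  ultimately have "card Y < card (insert (a',q) Z1)" using c by simp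
  moreover have "fst ` Y \<subseteq> insert a' (fst ` (Y - {(a',q)}))" by force
  then have "fst ` Y \<subseteq> fst ` (insert (a',q) Z1)" using cf by auto
  moreover have "snd ` Y \<subseteq> insert q (snd ` (Y - {(a',q)}))" by force
  then have "snd ` Y \<subseteq> snd ` (insert (a',q) Z1)" using cs by auto
  ultimately show ?thesis using m_insert[OF mZ a1 q1] by blast
qed

lemma aug_exists:
  "finite X \<Longrightarrow> finite Y \<Longrightarrow> is_matching X \<Longrightarrow> is_matching Y \<Longrightarrow> card Y < card X \<Longrightarrow>
   \<exists>Z \<subseteq> X \<union> Y. is_matching Z \<and> card Y < card Z \<and> fst ` Y \<subseteq> fst ` Z \<and> snd ` Y \<subseteq> snd ` Z"
proof (induction "card X" arbitrary: X Y rule: less_induct)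
  case less
  note fX = less.prems(1) and fY = less.prems(2) and mX = less.prems(3) and mY = less.prems(4)
    and cXY = less.prems(5)
  have "card (fst ` Y) < card (fst ` X)" using card_fst[OF mX] card_fst[OF mY] cXY by simp
  then have "\<not> fst ` X \<subseteq> fst ` Y" using card_mono[OF finite_imageI[OF fY]] by (meson not_le)
  then obtain x where "x \<in> X" "fst x \<notin> fst ` Y" by auto
  then obtain a q where g: "(a,q) \<in> X" and aY: "a \<notin> fst ` Y" by (cases x) auto
  show ?case
  proof (cases "q \<in> snd ` Y")
    case False
    have "(a,q) \<notin> Y" using aY by force
    then have "card (insert (a,q) Y) = Suc (card Y)" using fY by simp
    moreover have "is_matching (insert (a,q) Y)" using m_insert[OF mY aY False] .
    ultimately show ?thesis using g by (intro exI[of _ "insert (a,q) Y"]) auto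
  next
    case True
    then obtain a' where f: "(a',q) \<in> Y" by force
    have aa: "a' \<noteq> a" using f aY by force
    define Y1 where "Y1 = Y - {(a',q)}"
    have fY1: "finite Y1" and mY1: "is_matching Y1" using fY m_sub[OF mY, of "Y - {(a',q)}"] unfolding Y1_def by auto
    have cY1: "card Y1 = card Y - 1" using fY f unfolding Y1_def by simp
    have cY0: "card Y > 0" using fY f card_gt_0_iff by blast
    show ?thesis
    proof (cases "a' \<in> fst ` X")
      case False
      define X1 where "X1 = X - {(a,q)}"
      have fX1: "finite X1" and mX1: "is_matching X1" using fX m_sub[OF mX, of "X - {(a,q)}"] unfolding X1_def by auto
      have cX1: "card X1 = card X - 1" using fX g unfolding X1_def by simp
      have lt: "card X1 < card X" using cX1 cXY by simp
      have "card Y1 < card X1" using cX1 cY1 cXY cY0 by simp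
      from less.hyps[OF lt fX1 fY1 mX1 mY1 this] obtain Z1 where Z1: "Z1 \<subseteq> X1 \<union> Y1" "is_matching Z1"
        "card Y1 < card Z1" "fst ` Y1 \<subseteq> fst ` Z1" "snd ` Y1 \<subseteq> snd ` Z1" by blast
      have fZ1: "finite Z1" using Z1(1) fX1 fY1 finite_subset by blast
      have aW: "a' \<notin> fst ` X1" using False unfolding X1_def by auto
      have qW: "q \<notin> snd ` X1"
      proof
        assume "q \<in> snd ` X1"
        then obtain a'' where "(a'',q) \<in> X" "(a'',q) \<noteq> (a,q)" unfolding X1_def by force
        then show False using m_snd[OF mX g] by blast
      qed
      have r: "is_matching (insert (a',q) Z1) \<and> card Y < card (insert (a',q) Z1) \<and>
        fst ` Y \<subseteq> fst ` (insert (a',q) Z1) \<and> snd ` Y \<subseteq> snd ` (insert (a',q) Z1)"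
        using aug_fin[OF mY fY f Z1(2) fZ1 _ aW qW] Z1 unfolding Y1_def by blast
      have "insert (a',q) Z1 \<subseteq> X \<union> Y" using Z1(1) f unfolding X1_def Y1_def by auto
      then show ?thesis using r by blast
    next
      case True
      then obtain q2 where h: "(a',q2) \<in> X" by force
      have qq: "q2 \<noteq> q" using m_snd[OF mX g] h aa by blast
      define W where "W = X - {(a,q), (a',q2)}"
      define X1 where "X1 = insert (a,q2) W"
      have fW: "finite W" and mW: "is_matching W" using fX m_sub[OF mX, of "X - {(a,q), (a',q2)}"] unfolding W_def by auto
      have aW0: "a \<notin> fst ` W"
      proof
        assume "a \<in> fst ` W"
        then obtain q'' where "(a,q'') \<in> X" "(a,q'') \<noteq> (a,q)" unfolding W_def by force
        then show False using m_fst[OF mX g] by blast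
      qed
      have q2W: "q2 \<notin> snd ` W"
      proof
        assume "q2 \<in> snd ` W"
        then obtain a'' where "(a'',q2) \<in> X" "(a'',q2) \<noteq> (a',q2)" unfolding W_def by force
        then show False using m_snd[OF mX h] by blast
      qed
      have a'W: "a' \<notin> fst ` W"
      proof
        assume "a' \<in> fst ` W"
        then obtain q'' where "(a',q'') \<in> X" "(a',q'') \<noteq> (a',q2)" unfolding W_def by force
        then show False using m_fst[OF mX h] by blast
      qed
      have qW: "q \<notin> snd ` W"
      proof
        assume "q \<in> snd ` W"
        then obtain a'' where "(a'',q) \<in> X" "(a'',q) \<noteq> (a,q)" unfolding W_def by force
        then show False using m_snd[OF mX g] by blast
      qed
      have mX1: "is_matching X1" unfolding X1_def using m_insert[OF mW aW0 q2W] .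
      have fX1: "finite X1" using fW unfolding X1_def by simp
      have gh: "(a,q) \<noteq> (a',q2)" using aa by simp
      have cW: "card W = card X - 2" using fX g h gh unfolding W_def by (simp add: card_Diff_subset)
      have nW: "(a,q2) \<notin> W" using aW0 by force
      have cX2: "card X \<ge> 2"
      proof -
        have "{(a,q), (a',q2)} \<subseteq> X" using g h by simp
        then have "card {(a,q), (a',q2)} \<le> card X" using card_mono[OF fX] by blast
        then show ?thesis using gh by simp
      qed
      have cX1: "card X1 = card X - 1" unfolding X1_def using nW fW cW cX2 by simp
      have lt: "card X1 < card X" using cX1 cXY by simp
      have "card Y1 < card X1" using cX1 cY1 cXY cY0 by simp
      from less.hyps[OF lt fX1 fY1 mX1 mY1 this] obtain Z1 where Z1: "Z1 \<subseteq> X1 \<union> Y1" "is_matching Z1"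
        "card Y1 < card Z1" "fst ` Y1 \<subseteq> fst ` Z1" "snd ` Y1 \<subseteq> snd ` Z1" by blast
      have fZ1: "finite Z1" using Z1(1) fX1 fY1 finite_subset by blast
      show ?thesis
      proof (cases "(a,q2) \<in> Z1")
        case False
        have sub: "Z1 \<subseteq> W \<union> Y1" using Z1(1) False unfolding X1_def by auto
        have r: "is_matching (insert (a',q) Z1) \<and> card Y < card (insert (a',q) Z1) \<and>
          fst ` Y \<subseteq> fst ` (insert (a',q) Z1) \<and> snd ` Y \<subseteq> snd ` (insert (a',q) Z1)"
          using aug_fin[OF mY fY f Z1(2) fZ1 _ a'W qW] Z1 sub unfolding Y1_def by blast
        have "insert (a',q) Z1 \<subseteq> X \<union> Y" using sub f unfolding W_def Y1_def by auto
        then show ?thesis using r by blast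
      next
        case True
        define Z1' where "Z1' = Z1 - {(a,q2)}"
        have sub: "Z1' \<subseteq> W \<union> Y1" using Z1(1) unfolding X1_def Z1'_def by auto
        have mZ1': "is_matching Z1'" using m_sub[OF Z1(2), of "Z1 - {(a,q2)}"] unfolding Z1'_def by auto
        have fZ1': "finite Z1'" using fZ1 unfolding Z1'_def by simp
        have a'Y1: "a' \<notin> fst ` Y1"
        proof
          assume "a' \<in> fst ` Y1"
          then obtain q'' where "(a',q'') \<in> Y" "(a',q'') \<noteq> (a',q)" unfolding Y1_def by force
          then show False using m_fst[OF mY f] by blast
        qed
        have qY1: "q \<notin> snd ` Y1"
        proof
          assume "q \<in> snd ` Y1"
          then obtain a'' where "(a'',q) \<in> Y" "(a'',q) \<noteq> (a',q)" unfolding Y1_def by force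
          then show False using m_snd[OF mY f] by blast
        qed
        have a'Z: "a' \<notin> fst ` Z1'" using sub a'W a'Y1 by force
        have q2Z: "q2 \<notin> snd ` Z1'"
        proof
          assume "q2 \<in> snd ` Z1'"
          then obtain a'' where "(a'',q2) \<in> Z1" "(a'',q2) \<noteq> (a,q2)" unfolding Z1'_def by force
          then show False using m_snd[OF Z1(2) True] by blast
        qed
        have m1: "is_matching (insert (a',q2) Z1')" using m_insert[OF mZ1' a'Z q2Z] .
        have aZ: "a \<notin> fst ` (insert (a',q2) Z1')"
        proof
          assume "a \<in> fst ` (insert (a',q2) Z1')"
          then have "a \<in> fst ` Z1'" using aa by auto
          then obtain q'' where "(a,q'') \<in> Z1" "(a,q'') \<noteq> (a,q2)" unfolding Z1'_def by force
          then show False using m_fst[OF Z1(2) True] by blast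
        qed
        have qZ: "q \<notin> snd ` (insert (a',q2) Z1')"
        proof
          assume "q \<in> snd ` (insert (a',q2) Z1')"
          then have "q \<in> snd ` Z1'" using qq by auto
          then show False using sub qW qY1 by force
        qed
        define Z where "Z = insert (a,q) (insert (a',q2) Z1')"
        have mZ: "is_matching Z" unfolding Z_def using m_insert[OF m1 aZ qZ] .
        have n1: "(a',q2) \<notin> Z1'" using a'Z by force
        have n2: "(a,q) \<notin> insert (a',q2) Z1'" using aZ by force
        have cZ1': "card Z1' = card Z1 - 1" using fZ1 True unfolding Z1'_def by simp
        have cZ10: "card Z1 > 0" using fZ1 True card_gt_0_iff by blast
        have cZ: "card Z = Suc (Suc (card Z1'))" unfolding Z_def using n1 n2 fZ1' by simp
        have "card Y < card Z" using cZ cZ1' cZ10 Z1(3) cY1 cY0 by simp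
        moreover have "fst ` Y \<subseteq> fst ` Z"
        proof
          fix x assume "x \<in> fst ` Y"
          then have "x = a' \<or> x \<in> fst ` Y1" unfolding Y1_def using f by force
          then have "x = a' \<or> x \<in> fst ` Z1" using Z1(4) by blast
          then have "x = a' \<or> x = a \<or> x \<in> fst ` Z1'" unfolding Z1'_def by force
          then show "x \<in> fst ` Z" unfolding Z_def by force
        qed
        moreover have "snd ` Y \<subseteq> snd ` Z"
        proof
          fix x assume "x \<in> snd ` Y"
          then have "x = q \<or> x \<in> snd ` Y1" unfolding Y1_def using f by force
          then have "x = q \<or> x \<in> snd ` Z1" using Z1(5) by blast
          then have "x = q \<or> x = q2 \<or> x \<in> snd ` Z1'" unfolding Z1'_def by force
          then show "x \<in> snd ` Z" unfolding Z_def by force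
        qed
        moreover have "Z \<subseteq> X \<union> Y" unfolding Z_def using g h sub unfolding W_def Y1_def by auto
        ultimately show ?thesis using mZ by blast
      qed
    qed
  qed
qed



definition "Fst V E rk s = fst (irving_stage V E rk s)"
definition "Rst V E rk s = snd (irving_stage V E rk s)"
definition "Fpr V E rk s = {e \<in> Fst V E rk s. \<not> joins_OOU (odds V (Fst V E rk s)) (unreach V (Fst V E rk s)) e}"
definition "Rpr V E rk s = {e \<in> Rst V E rk s. \<not> (Suc s < case_prod rk e \<and>
    incident (odds V (Fst V E rk s) \<union> unreach V (Fst V E rk s)) e)}"

lemma Fst_0: "Fst V E rk 0 = {e \<in> E. case_prod rk e = 1}" and Rst_0: "Rst V E rk 0 = {e \<in> E. case_prod rk e > 1}"
  by (simp_all add: Fst_def Rst_def)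

lemma Fst_Suc: "Fst V E rk (Suc s) = Fpr V E rk s \<union> {e \<in> Rpr V E rk s. case_prod rk e = Suc (Suc s)}"
  and Rst_Suc: "Rst V E rk (Suc s) = {e \<in> Rpr V E rk s. Suc (Suc s) < case_prod rk e}"
  by (simp_all add: Fst_def Rst_def Fpr_def Rpr_def Let_def)

lemma St1: "Fst V E rk s \<union> Rst V E rk s \<subseteq> E"
  by (induction s) (auto simp: Fst_0 Rst_0 Fst_Suc Rst_Suc Fpr_def Rpr_def)

lemma St2: "(e \<in> Fst V E rk s \<longrightarrow> case_prod rk e \<le> Suc s) \<and> (e \<in> Rst V E rk s \<longrightarrow> Suc s < case_prod rk e)"
proof (induction s arbitrary: e)
  case 0 then show ?case by (simp add: Fst_0 Rst_0)
next
  case (Suc s)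
  show ?case
  proof (intro conjI impI)
    assume "e \<in> Fst V E rk (Suc s)"
    then have "e \<in> Fst V E rk s \<or> case_prod rk e = Suc (Suc s)"
      unfolding Fst_Suc Fpr_def Rpr_def by blast
    then show "case_prod rk e \<le> Suc (Suc s)" using Suc.IH[of e] by linarith
  next
    assume "e \<in> Rst V E rk (Suc s)"
    then show "Suc (Suc s) < case_prod rk e" unfolding Rst_Suc by blast
  qed
qed

lemma St_mono: "s \<le> t \<Longrightarrow> e \<in> Fst V E rk t \<Longrightarrow> case_prod rk e \<le> Suc s \<Longrightarrow> e \<in> Fst V E rk s"
proof (induction t)
  case 0 then show ?case by simp
next
  case (Suc t)
  show ?case
  proof (cases "s = Suc t")
    case True then show ?thesis using Suc.prems by simp
  next
    case False
    then have st: "s \<le> t" using Suc.prems by simp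
    have "e \<in> Fst V E rk t" using Suc.prems(2,3) st unfolding Fst_Suc Fpr_def by auto
    then show ?thesis using Suc.IH st Suc.prems(3) by blast
  qed
qed

lemma St_sub: "Fst V E rk (Suc t) \<union> Rst V E rk (Suc t) \<subseteq> Fst V E rk t \<union> Rst V E rk t"
  unfolding Fst_Suc Rst_Suc Fpr_def Rpr_def by auto

lemma St_persist: "s < t \<Longrightarrow> Fst V E rk t \<union> Rst V E rk t \<subseteq> Fpr V E rk s \<union> Rpr V E rk s"
proof (induction t)
  case 0 then show ?case by simp
next
  case (Suc t)
  show ?case
  proof (cases "s = t")
    case True then show ?thesis unfolding Fst_Suc Rst_Suc by auto
  next
    case False
    then have "s < t" using Suc.prems by simp
    then show ?thesis using Suc.IH St_sub by blast
  qed
qed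



lemma ex_max: "finite F \<Longrightarrow> \<exists>N. max_matching F N"
proof -
  assume fF: "finite F"
  define S where "S = {N. N \<subseteq> F \<and> is_matching N}"
  have fS: "finite S" unfolding S_def using fF by auto
  have "{} \<in> S" unfolding S_def is_matching_def by auto
  then have ne: "card ` S \<noteq> {}" by auto
  obtain N where N: "N \<in> S" "card N = Max (card ` S)"
    using Max_in[OF finite_imageI[OF fS] ne] by auto
  have "\<forall>N'. N' \<subseteq> F \<longrightarrow> is_matching N' \<longrightarrow> card N' \<le> card N"
    using N(2) Max_ge[OF finite_imageI[OF fS]] unfolding S_def by auto
  then show ?thesis using N(1) unfolding S_def max_matching_def by blast
qed

lemma cum_split: "finite X \<Longrightarrow> card {e\<in>X. f e \<le> Suc j} = card {e\<in>X. f e \<le> j} + card {e\<in>X. f e = Suc j}"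
proof -
  assume fX: "finite X"
  have "{e\<in>X. f e \<le> Suc j} = {e\<in>X. f e \<le> j} \<union> {e\<in>X. f e = Suc j}" by auto
  moreover have "{e\<in>X. f e \<le> j} \<inter> {e\<in>X. f e = Suc j} = {}" by auto
  ultimately show ?thesis using fX by (simp add: card_Un_disjoint)
qed

lemma lex_from_cum:
  assumes fX: "finite X" and fY: "finite Y"
    and eq: "\<forall>j\<le>K. card {e\<in>X. case_prod rk e \<le> j} = card {e\<in>Y. case_prod rk e \<le> j}"
    and lt: "card {e\<in>X. case_prod rk e \<le> Suc K} < card {e\<in>Y. case_prod rk e \<le> Suc K}"
  shows "lex_less (signature rk X) (signature rk Y)"
proof -
  have sig: "\<forall>j\<le>K. signature rk X j = signature rk Y j"
  proof (intro allI impI)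
    fix j assume j: "j \<le> K"
    show "signature rk X j = signature rk Y j"
    proof (cases j)
      case 0
      have "card {e\<in>X. case_prod rk e \<le> 0} = card {e\<in>Y. case_prod rk e \<le> 0}" using eq by blast
      then show ?thesis unfolding signature_def 0 by simp
    next
      case (Suc j')
      then have "j' \<le> K" using j by simp
      have e1: "card {e\<in>X. case_prod rk e \<le> Suc j'} = card {e\<in>Y. case_prod rk e \<le> Suc j'}"
        using eq j Suc by blast
      have e2: "card {e\<in>X. case_prod rk e \<le> j'} = card {e\<in>Y. case_prod rk e \<le> j'}"
        using eq \<open>j' \<le> K\<close> by blast
      show ?thesis using e1 e2 cum_split[OF fX, of "case_prod rk" j'] cum_split[OF fY, of "case_prod rk" j']
        unfolding signature_def Suc by linarith
    qed
  qed
  have "signature rk X (Suc K) < signature rk Y (Suc K)"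
  proof -
    have "card {e\<in>X. case_prod rk e \<le> K} = card {e\<in>Y. case_prod rk e \<le> K}" using eq by blast
    then show ?thesis using lt cum_split[OF fX, of "case_prod rk" K] cum_split[OF fY, of "case_prod rk" K]
      unfolding signature_def by linarith
  qed
  then show ?thesis unfolding lex_less_def using sig by (intro exI[of _ "Suc K"]) (auto simp: less_Suc_eq_le)
qed

lemma cov_transfer: "fst ` Y \<subseteq> fst ` Z \<Longrightarrow> snd ` Y \<subseteq> snd ` Z \<Longrightarrow> matched_in Y v \<Longrightarrow> matched_in Z v"
  by (cases v) (force simp: matched_in_def)+

locale RM =
  fixes A :: "'a set" and P :: "'p set" and E :: "('a \<times> 'p) set"
    and rank :: "'a \<Rightarrow> 'p \<Rightarrow> nat" and r :: nat
    and M :: "('a \<times> ('p + 'a)) set"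
  assumes finA: "finite A" and finP: "finite P" and Esub: "E \<subseteq> A \<times> P"
    and rb: "\<forall>(a,p) \<in> E. 1 \<le> rank a p \<and> rank a p \<le> r"
    and rm: "rank_maximal (ext_edges A E) (ext_rank r rank) M"
begin

abbreviation "QQ \<equiv> ext_posts A P"
abbreviation "VV \<equiv> inst_vertices A QQ"
abbreviation "EE \<equiv> ext_edges A E"
abbreviation "rk \<equiv> ext_rank r rank"
abbreviation "rke \<equiv> case_prod rk"
abbreviation "FF s \<equiv> Fst VV EE rk s"
abbreviation "RR s \<equiv> Rst VV EE rk s"
abbreviation "NN s \<equiv> SOME N. max_matching (FF s) N"
abbreviation "Mle j \<equiv> {e\<in>M. rke e \<le> j}"
abbreviation "Oo s \<equiv> odds VV (FF s)"
abbreviation "Uu s \<equiv> unreach VV (FF s)"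
definition "CAs s = Oo s \<union> (Uu s \<inter> range Inl)"

lemma EE_in: "e \<in> EE \<Longrightarrow> fst e \<in> A \<and> snd e \<in> QQ"
  using Esub unfolding ext_edges_def ext_posts_def by auto

lemma finQQ: "finite QQ" unfolding ext_posts_def using finA finP by simp
lemma finVV: "finite VV" unfolding inst_vertices_def using finA finQQ by simp

lemma finEE: "finite EE"
proof -
  have "EE \<subseteq> A \<times> QQ" using EE_in by force
  then show ?thesis using finA finQQ finite_subset by blast
qed

lemma EE_rank: "e \<in> EE \<Longrightarrow> 1 \<le> rke e \<and> rke e \<le> Suc r"
  using rb unfolding ext_edges_def by auto

lemma MEE: "M \<subseteq> EE" and mM: "is_matching M" using rm by (auto simp: rank_maximal_def)
lemma finM: "finite M" using MEE finEE finite_subset by blast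

lemma no_better: "X \<subseteq> EE \<Longrightarrow> is_matching X \<Longrightarrow> \<not> lex_less (signature rk M) (signature rk X)"
  using rm unfolding rank_maximal_def by blast

lemma FF_EE: "FF s \<subseteq> EE" using St1 by blast
lemma RR_EE: "RR s \<subseteq> EE" using St1 by blast

lemma bipV_s: "bipV VV (FF s) (NN s)"
proof
  show "finite (FF s)" using FF_EE finEE finite_subset by blast
  show "\<And>e. e \<in> FF s \<Longrightarrow> Inl (fst e) \<in> VV \<and> Inr (snd e) \<in> VV"
    using FF_EE EE_in unfolding inst_vertices_def by blast
  show "max_matching (FF s) (NN s)" using ex_max[OF \<open>finite (FF s)\<close>] by (rule someI_ex)
  show "finite VV" using finVV .
qed

lemma NN_s: "NN s \<subseteq> FF s" "is_matching (NN s)"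
proof -
  interpret B: bipV VV "FF s" "NN s" by (rule bipV_s)
  show "NN s \<subseteq> FF s" "is_matching (NN s)" using B.NF B.Nm by auto
qed

lemma OO_eq: "Oo s = odd_wrt VV (FF s) (NN s)" and UU_eq: "Uu s = VV - even_wrt VV (FF s) (NN s) - odd_wrt VV (FF s) (NN s)"
  by (simp_all add: odds_def unreach_def evens_def)

lemma GEs:
  assumes "Y \<subseteq> FF s" "is_matching Y" "card (NN s) \<le> card Y"
  shows "\<forall>v\<in>Oo s \<union> Uu s. matched_in Y v" "\<forall>e\<in>Y. \<not> joins_OOU (Oo s) (Uu s) e"
proof -
  interpret B: bipV VV "FF s" "NN s" by (rule bipV_s)
  show "\<forall>v\<in>Oo s \<union> Uu s. matched_in Y v" "\<forall>e\<in>Y. \<not> joins_OOU (Oo s) (Uu s) e"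
    using B.GE_max[OF assms] unfolding OO_eq UU_eq by auto
qed

lemma CAs_bound: "X \<subseteq> FF s \<Longrightarrow> is_matching X \<Longrightarrow> card X \<le> card (CAs s)"
proof -
  interpret B: bipV VV "FF s" "NN s" by (rule bipV_s)
  have "CAs s = B.CA" unfolding CAs_def B.CA_def OO_eq UU_eq ..
  then show "X \<subseteq> FF s \<Longrightarrow> is_matching X \<Longrightarrow> card X \<le> card (CAs s)" using B.matching_le_CA by simp
qed

lemma finCAs: "finite (CAs s)"
proof -
  interpret B: bipV VV "FF s" "NN s" by (rule bipV_s)
  have "CAs s = B.CA" unfolding CAs_def B.CA_def OO_eq UU_eq ..
  then show ?thesis using B.finCA by simp
qed

lemma finFF: "finite (FF s)" using FF_EE finEE finite_subset by blast

end


context RM begin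

definition "INVs s \<longleftrightarrow> Mle (Suc s) \<subseteq> FF s \<and> {e\<in>M. Suc s < rke e} \<subseteq> RR s \<and>
   (\<forall>X. X \<subseteq> FF s \<longrightarrow> is_matching X \<longrightarrow> card X \<le> card (Mle (Suc s)))"

lemma mMle: "is_matching (Mle j)" by (rule m_sub[OF mM]) auto
lemma finMle: "finite (Mle j)" using finM by simp

lemma INV0: "INVs 0"
proof -
  have a: "Mle (Suc 0) \<subseteq> FF 0" using MEE EE_rank unfolding Fst_0 by fastforce
  have b: "{e\<in>M. Suc 0 < rke e} \<subseteq> RR 0" using MEE unfolding Rst_0 by auto
  have c: "card X \<le> card (Mle (Suc 0))" if X: "X \<subseteq> FF 0" "is_matching X" for X
  proof (rule ccontr)
    assume "\<not> ?thesis"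
    then have lt: "card (Mle (Suc 0)) < card X" by simp
    have XE: "X \<subseteq> EE" using X(1) FF_EE by blast
    have fX: "finite X" using XE finEE finite_subset by blast
    have z1: "{e\<in>M. rke e \<le> 0} = {}" using MEE EE_rank by fastforce
    have z2: "{e\<in>X. rke e \<le> 0} = {}" using XE EE_rank by fastforce
    have "{e\<in>X. rke e \<le> Suc 0} = X" using X(1) unfolding Fst_0 by auto
    then have lt1: "card {e\<in>M. rke e \<le> Suc 0} < card {e\<in>X. rke e \<le> Suc 0}" using lt by simp
    have eq0: "\<forall>j\<le>0. card {e\<in>M. rke e \<le> j} = card {e\<in>X. rke e \<le> j}"
    proof (intro allI impI)
      fix j :: nat assume "j \<le> 0"
      then have j0: "j = 0" by simp
      show "card {e\<in>M. rke e \<le> j} = card {e\<in>X. rke e \<le> j}" unfolding j0 z1 z2 ..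
    qed
    have "lex_less (signature rk M) (signature rk X)"
      using lex_from_cum[OF finM fX eq0 lt1] .
    then show False using no_better[OF XE X(2)] by simp
  qed
  show ?thesis unfolding INVs_def using a b c by blast
qed

lemma notinc:
  assumes Ycov: "\<forall>v\<in>Oo s \<union> Uu s. matched_in (Mle (Suc s)) v"
    and e: "e \<in> M" "Suc s < rke e"
  shows "\<not> incident (Oo s \<union> Uu s) e"
proof
  assume "incident (Oo s \<union> Uu s) e"
  then obtain v where v: "v \<in> Oo s \<union> Uu s" "v \<in> ends e" unfolding incident_def ends_def by auto
  then obtain e' where e': "e' \<in> Mle (Suc s)" "v \<in> ends e'" using Ycov v(1) unfolding matched_in_iff by blast
  have "e = e'" using match_share[OF mM e(1) _ v(2) e'(2)] e'(1) by blast
  then show False using e e'(1) by simp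
qed

lemma INV_step:
  assumes IH: "\<forall>s'\<le>s. INVs s'"
  shows "INVs (Suc s)"
proof -
  have I: "Mle (Suc s') \<subseteq> FF s'" "{e\<in>M. Suc s' < rke e} \<subseteq> RR s'"
      "\<And>X. X \<subseteq> FF s' \<Longrightarrow> is_matching X \<Longrightarrow> card X \<le> card (Mle (Suc s'))" if "s' \<le> s" for s'
    using IH that unfolding INVs_def by blast+
  have GE: "(\<forall>v\<in>Oo s' \<union> Uu s'. matched_in (Mle (Suc s')) v) \<and> (\<forall>e\<in>Mle (Suc s'). \<not> joins_OOU (Oo s') (Uu s') e)"
    if "s' \<le> s" for s'
    using GEs[OF I(1)[OF that] mMle I(3)[OF that NN_s]] by blast
  have ss: "s \<le> s" by simp
  note Ycov = GE[OF ss, THEN conjunct1] and Yoou = GE[OF ss, THEN conjunct2]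
  have a: "Mle (Suc (Suc s)) \<subseteq> FF (Suc s)"
  proof
    fix e assume e: "e \<in> Mle (Suc (Suc s))"
    show "e \<in> FF (Suc s)"
    proof (cases "rke e \<le> Suc s")
      case True
      then have "e \<in> Mle (Suc s)" using e by simp
      then have "e \<in> FF s" "\<not> joins_OOU (Oo s) (Uu s) e" using I(1)[OF ss] Yoou by blast+
      then show ?thesis unfolding Fst_Suc Fpr_def by blast
    next
      case False
      then have r: "rke e = Suc (Suc s)" using e by simp
      then have "e \<in> RR s" using I(2)[OF ss] e by auto
      moreover have "\<not> incident (Oo s \<union> Uu s) e" using notinc[OF Ycov] e r by simp
      ultimately show ?thesis unfolding Fst_Suc Rpr_def using r by blast
    qed
  qed
  have b: "{e\<in>M. Suc (Suc s) < rke e} \<subseteq> RR (Suc s)"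
  proof
    fix e assume e: "e \<in> {e\<in>M. Suc (Suc s) < rke e}"
    then have "e \<in> RR s" using I(2)[OF ss] by auto
    moreover have "\<not> incident (Oo s \<union> Uu s) e" using notinc[OF Ycov] e by simp
    ultimately show "e \<in> RR (Suc s)" using e unfolding Rst_Suc Rpr_def by blast
  qed
  have c: "card X \<le> card (Mle (Suc (Suc s)))" if X: "X \<subseteq> FF (Suc s)" "is_matching X" for X
  proof (rule ccontr)
    assume "\<not> ?thesis"
    then have lt: "card (Mle (Suc (Suc s))) < card X" by simp
    have fX: "finite X" using X(1) finFF finite_subset by blast
    obtain Z where Z: "Z \<subseteq> X \<union> Mle (Suc (Suc s))" "is_matching Z" "card (Mle (Suc (Suc s))) < card Z"
      "fst ` Mle (Suc (Suc s)) \<subseteq> fst ` Z" "snd ` Mle (Suc (Suc s)) \<subseteq> snd ` Z"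
      using aug_exists[OF fX finMle X(2) mMle lt] by blast
    have ZF: "Z \<subseteq> FF (Suc s)" using Z(1) X(1) a by blast
    have ZE: "Z \<subseteq> EE" using ZF FF_EE by blast
    have fZ: "finite Z" using ZE finEE finite_subset by blast
    have eqc: "\<forall>j\<le>Suc s. card {e\<in>M. rke e \<le> j} = card {e\<in>Z. rke e \<le> j}"
    proof (intro allI impI)
      fix j assume j: "j \<le> Suc s"
      show "card {e\<in>M. rke e \<le> j} = card {e\<in>Z. rke e \<le> j}"
      proof (cases j)
        case 0
        have z1: "{e\<in>M. rke e \<le> 0} = {}" using MEE EE_rank by fastforce
        have z2: "{e\<in>Z. rke e \<le> 0} = {}" using ZE EE_rank by fastforce
        show ?thesis unfolding 0 z1 z2 ..
      next
        case (Suc s')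
        then have s': "s' \<le> s" using j by simp
        define Zs where "Zs = {e\<in>Z. rke e \<le> Suc s'}"
        have ZsF: "Zs \<subseteq> FF s'"
        proof
          fix e assume "e \<in> Zs"
          then show "e \<in> FF s'" using St_mono[of s' "Suc s" e VV EE rk, OF le_SucI[OF s']] ZF unfolding Zs_def by blast
        qed
        have mZs: "is_matching Zs" unfolding Zs_def by (rule m_sub[OF Z(2)]) auto
        have le1: "card Zs \<le> card (Mle (Suc s'))" using I(3)[OF s' ZsF mZs] .
        have le2: "card (Mle (Suc s')) \<le> card (CAs s')" using CAs_bound[OF I(1)[OF s'] mMle] .
        have le3: "card (CAs s') \<le> card Zs"
        proof (rule inj_bound)
          show "finite Zs" unfolding Zs_def using fZ by simp
          show "\<forall>c\<in>CAs s'. \<exists>e\<in>Zs. c \<in> ends e \<and> ends e \<inter> CAs s' = {c}"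
          proof
            fix c assume c: "c \<in> CAs s'"
            then have cOU: "c \<in> Oo s' \<union> Uu s'" unfolding CAs_def by blast
            have "matched_in (Mle (Suc s')) c" using GE[OF s'] cOU by blast
            moreover have "Mle (Suc s') \<subseteq> Mle (Suc (Suc s))" using s' by auto
            ultimately have "matched_in (Mle (Suc (Suc s))) c" unfolding matched_in_iff by blast
            then have "matched_in Z c" using cov_transfer[OF Z(4) Z(5)] by blast
            then obtain e where e: "e \<in> Z" "c \<in> ends e" by (auto simp: matched_in_iff)
            have inc: "incident (Oo s' \<union> Uu s') e" using e(2) cOU unfolding incident_def ends_def by auto
            have lt': "s' < Suc s" using s' by simp
            have "e \<in> Fst VV EE rk (Suc s) \<union> Rst VV EE rk (Suc s)" using ZF e(1) by blast
            then have "e \<in> Fpr VV EE rk s' \<union> Rpr VV EE rk s'"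
              using St_persist[of s' "Suc s" VV EE rk, OF lt'] by blast
            moreover have "e \<notin> Rpr VV EE rk s'"
            proof
              assume "e \<in> Rpr VV EE rk s'"
              then have "e \<in> RR s'" "\<not> (Suc s' < rke e \<and> incident (Oo s' \<union> Uu s') e)"
                unfolding Rpr_def by auto
              then show False using St2[of e VV EE rk s'] inc by blast
            qed
            ultimately have eF: "e \<in> FF s'" "\<not> joins_OOU (Oo s') (Uu s') e" unfolding Fpr_def by auto
            have "rke e \<le> Suc s'" using St2[of e VV EE rk s'] eF(1) by blast
            then have "e \<in> Zs" unfolding Zs_def using e(1) by simp
            moreover have "ends e \<inter> CAs s' = {c}"
              using uniq_C[OF eF(2) e(2)] c unfolding CAs_def by blast
            ultimately show "\<exists>e\<in>Zs. c \<in> ends e \<and> ends e \<inter> CAs s' = {c}" using e(2) by blast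
          qed
        qed
        show ?thesis using le1 le2 le3 unfolding Zs_def Suc by simp
      qed
    qed
    have "\<forall>e\<in>Z. rke e \<le> Suc (Suc s)"
    proof
      fix e assume "e \<in> Z"
      then have "e \<in> FF (Suc s)" using ZF by blast
      then show "rke e \<le> Suc (Suc s)" using St2[of e VV EE rk "Suc s"] by blast
    qed
    then have "{e\<in>Z. rke e \<le> Suc (Suc s)} = Z" by blast
    then have "card {e\<in>M. rke e \<le> Suc (Suc s)} < card {e\<in>Z. rke e \<le> Suc (Suc s)}" using Z(3) by simp
    then have "lex_less (signature rk M) (signature rk Z)" using lex_from_cum[OF finM fZ eqc] by simp
    then show False using no_better[OF ZE Z(2)] by simp
  qed
  show ?thesis unfolding INVs_def using a b c by blast
qed

lemma INV_all: "\<forall>s'\<le>s. INVs s'"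
proof (induction s)
  case 0 then show ?case using INV0 by simp
next
  case (Suc s)
  show ?case
  proof (intro allI impI)
    fix s' assume "s' \<le> Suc s"
    then have "s' \<le> s \<or> s' = Suc s" by auto
    then show "INVs s'" using Suc.IH INV_step[OF Suc.IH] by blast
  qed
qed

lemma INV: "INVs s" using INV_all by blast

end


lemma sum_as_cards:
  fixes f :: "'e \<Rightarrow> nat"
  assumes fX: "finite X" and b: "\<forall>e\<in>X. f e \<le> R"
  shows "(\<Sum>e\<in>X. f e) = (\<Sum>j<R. card {e\<in>X. j < f e})"
proof -
  have 1: "f e = (\<Sum>j<R. if j < f e then 1 else 0)" if "e \<in> X" for e
  proof -
    have "(\<Sum>j<R. if j < f e then 1 else (0::nat)) = card {j\<in>{..<R}. j < f e}"
      by (simp add: sum.inter_filter[symmetric])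
    also have "{j\<in>{..<R}. j < f e} = {..<f e}" using b that by auto
    finally show ?thesis by simp
  qed
  have "(\<Sum>e\<in>X. f e) = (\<Sum>e\<in>X. \<Sum>j<R. if j < f e then 1 else 0)" using 1 by (rule sum.cong[OF refl])
  also have "\<dots> = (\<Sum>j<R. \<Sum>e\<in>X. if j < f e then 1 else 0)" by (rule sum.swap)
  also have "\<dots> = (\<Sum>j<R. card {e\<in>X. j < f e})"
    using fX by (simp add: sum.inter_filter[symmetric])
  finally show ?thesis .
qed

lemma card_split_le: "finite X \<Longrightarrow> card {e\<in>X. f e \<le> (j::nat)} + card {e\<in>X. j < f e} = card X"
proof -
  assume fX: "finite X"
  have "X = {e\<in>X. f e \<le> j} \<union> {e\<in>X. j < f e}" by auto
  moreover have "{e\<in>X. f e \<le> j} \<inter> {e\<in>X. j < f e} = {}" by auto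
  ultimately show ?thesis using fX card_Un_disjoint[of "{e\<in>X. f e \<le> j}" "{e\<in>X. j < f e}"] by simp
qed

lemma partner_eq: "is_matching M \<Longrightarrow> (a,p) \<in> M \<Longrightarrow> partner M p = a"
  unfolding partner_def by (rule the_equality) (auto dest: m_snd)

lemma exchange:
  fixes a :: "'i \<Rightarrow> 'x" and src dst :: "'i \<Rightarrow> 'q" and g :: "'x \<times> 'q \<Rightarrow> int"
  assumes mM: "is_matching M" and fM: "finite M" and fI: "finite I"
    and isrc: "inj_on src I" and idst: "inj_on dst I"
    and srcM: "\<forall>i\<in>I. (a i, src i) \<in> M"
    and dstc: "\<forall>i\<in>I. dst i \<in> src ` I \<or> dst i \<notin> snd ` M"
  defines "Rem \<equiv> (\<lambda>i. (a i, src i)) ` I" and "Add \<equiv> (\<lambda>i. (a i, dst i)) ` I"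
  shows "is_matching ((M - Rem) \<union> Add)" "fst ` ((M - Rem) \<union> Add) = fst ` M"
    "(\<Sum>e\<in>(M - Rem) \<union> Add. g e) = (\<Sum>e\<in>M. g e) + (\<Sum>i\<in>I. g (a i, dst i) - g (a i, src i))"
proof -
  have ia: "inj_on a I"
  proof (rule inj_onI)
    fix i j assume i: "i \<in> I" "j \<in> I" "a i = a j"
    have "(a i, src i) \<in> M" "(a i, src j) \<in> M" using srcM i by auto
    then have "src i = src j" using m_fst[OF mM] by blast
    then show "i = j" using inj_onD[OF isrc _ i(1) i(2)] by blast
  qed
  have hlp: "fst p \<noteq> a i \<and> snd p \<noteq> dst i" if p: "p \<in> M - Rem" and i: "i \<in> I" for p i
  proof
    obtain x y where pe: "p = (x,y)" by (cases p)
    show "fst p \<noteq> a i"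
    proof
      assume "fst p = a i"
      then have "(a i, y) \<in> M" using p pe by auto
      moreover have "(a i, src i) \<in> M" using srcM i by blast
      ultimately have "y = src i" using m_fst[OF mM] by blast
      then have "p \<in> Rem" using pe \<open>fst p = a i\<close> i unfolding Rem_def by auto
      then show False using p by simp
    qed
    show "snd p \<noteq> dst i"
    proof
      assume sd: "snd p = dst i"
      then have "dst i \<in> snd ` M" using p by force
      then obtain j where j: "j \<in> I" "dst i = src j" using dstc i by blast
      have "(x, src j) \<in> M" using p pe sd j(2) by auto
      moreover have "(a j, src j) \<in> M" using srcM j(1) by blast
      ultimately have "x = a j" using m_snd[OF mM] by blast
      then have "p \<in> Rem" using pe sd j unfolding Rem_def by auto
      then show False using p by simp
    qed
  qed
  show "is_matching ((M - Rem) \<union> Add)"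
    unfolding is_matching_def
  proof (intro allI impI)
    fix x y x' y' assume e1: "(x,y) \<in> (M - Rem) \<union> Add" and e2: "(x',y') \<in> (M - Rem) \<union> Add"
    show "(x = x') = (y = y')"
    proof (cases "(x,y) \<in> Add")
      case True
      then obtain i where i: "i \<in> I" "x = a i" "y = dst i" unfolding Add_def by auto
      show ?thesis
      proof (cases "(x',y') \<in> Add")
        case True
        then obtain j where j: "j \<in> I" "x' = a j" "y' = dst j" unfolding Add_def by auto
        show ?thesis using i j inj_on_eq_iff[OF ia i(1) j(1)] inj_on_eq_iff[OF idst i(1) j(1)] by simp
      next
        case False
        then have "(x',y') \<in> M - Rem" using e2 by blast
        then show ?thesis using hlp[of "(x',y')" i] i by auto
      qed
    next
      case False
      then have o1: "(x,y) \<in> M - Rem" using e1 by blast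
      show ?thesis
      proof (cases "(x',y') \<in> Add")
        case True
        then obtain j where j: "j \<in> I" "x' = a j" "y' = dst j" unfolding Add_def by auto
        show ?thesis using hlp[OF o1 j(1)] j by auto
      next
        case False
        then have "(x',y') \<in> M - Rem" using e2 by blast
        then show ?thesis using o1 mM unfolding is_matching_def by blast
      qed
    qed
  qed
  have RM: "Rem \<subseteq> M" unfolding Rem_def using srcM by auto
  have fa: "fst ` Add = a ` I" "fst ` Rem = a ` I" unfolding Add_def Rem_def by force+
  show "fst ` ((M - Rem) \<union> Add) = fst ` M"
  proof -
    have "M = (M - Rem) \<union> Rem" using RM by blast
    then have "fst ` M = fst ` (M - Rem) \<union> fst ` Rem" by (metis image_Un)
    then show ?thesis using fa by (simp add: image_Un)
  qed
  have disj: "(M - Rem) \<inter> Add = {}"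
  proof (rule ccontr)
    assume "(M - Rem) \<inter> Add \<noteq> {}"
    then obtain p where p: "p \<in> M - Rem" "p \<in> Add" by blast
    then obtain i where i: "i \<in> I" "p = (a i, dst i)" unfolding Add_def by auto
    then show False using hlp[OF p(1) i(1)] by simp
  qed
  have fA: "finite Add" unfolding Add_def using fI by simp
  have injR: "inj_on (\<lambda>i. (a i, src i)) I" using isrc by (auto simp: inj_on_def)
  have injA: "inj_on (\<lambda>i. (a i, dst i)) I" using idst by (auto simp: inj_on_def)
  have "(\<Sum>e\<in>(M - Rem) \<union> Add. g e) = (\<Sum>e\<in>M - Rem. g e) + (\<Sum>e\<in>Add. g e)"
    using disj fM fA by (simp add: sum.union_disjoint)
  also have "(\<Sum>e\<in>M - Rem. g e) = (\<Sum>e\<in>M. g e) - (\<Sum>e\<in>Rem. g e)" using sum_diff[OF fM RM] .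
  also have "(\<Sum>e\<in>Rem. g e) = (\<Sum>i\<in>I. g (a i, src i))" unfolding Rem_def using sum.reindex[OF injR] by simp
  also have "(\<Sum>e\<in>Add. g e) = (\<Sum>i\<in>I. g (a i, dst i))" unfolding Add_def using sum.reindex[OF injA] by simp
  finally show "(\<Sum>e\<in>(M - Rem) \<union> Add. g e) = (\<Sum>e\<in>M. g e) + (\<Sum>i\<in>I. g (a i, dst i) - g (a i, src i))"
    by (simp add: sum_subtractf)
qed



context RM begin

abbreviation "Gr \<equiv> reduced_graph VV EE rk (Suc r)"

lemma Gr_eq: "Gr = {e \<in> FF r. \<not> joins_OOU (Oo r) (Uu r) e}"
  by (simp add: reduced_graph_def Gprime_def Fst_def)

lemma rke_bnd: "e \<in> EE \<Longrightarrow> rke e \<le> Suc r" using EE_rank by blast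
lemma rke_pos: "e \<in> EE \<Longrightarrow> \<not> rke e \<le> 0" using EE_rank by fastforce

lemma Mle_all: "Mle (Suc r) = M"
proof -
  have "\<forall>e\<in>M. rke e \<le> Suc r" using MEE rke_bnd by blast
  then show ?thesis by blast
qed

lemma M_Gr: "M \<subseteq> Gr"
proof -
  have I: "Mle (Suc r) \<subseteq> FF r" "\<And>X. X \<subseteq> FF r \<Longrightarrow> is_matching X \<Longrightarrow> card X \<le> card (Mle (Suc r))"
    using INV[of r] unfolding INVs_def by blast+
  have "\<forall>e\<in>Mle (Suc r). \<not> joins_OOU (Oo r) (Uu r) e"
    using GEs(2)[OF I(1) mMle I(2)[OF NN_s]] .
  then show ?thesis using I(1) unfolding Gr_eq Mle_all by blast
qed

lemma Gr_EE: "Gr \<subseteq> EE" using FF_EE unfolding Gr_eq by blast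

lemma cum_le:
  assumes XG: "X \<subseteq> Gr" and mX: "is_matching X"
  shows "card {e\<in>X. rke e \<le> j} \<le> card {e\<in>M. rke e \<le> j}"
proof -
  have XE: "X \<subseteq> EE" using XG Gr_EE by blast
  have XF: "X \<subseteq> FF r" using XG unfolding Gr_eq by blast
  have fX: "finite X" using XE finEE finite_subset by blast
  have low: "card {e\<in>X. rke e \<le> Suc s} \<le> card {e\<in>M. rke e \<le> Suc s}" if s: "s \<le> r" for s
  proof -
    have sub: "{e\<in>X. rke e \<le> Suc s} \<subseteq> FF s"
    proof
      fix e assume "e \<in> {e\<in>X. rke e \<le> Suc s}"
      then show "e \<in> FF s" using St_mono[of s r e VV EE rk, OF s] XF by blast
    qed
    have m: "is_matching {e\<in>X. rke e \<le> Suc s}" by (rule m_sub[OF mX]) auto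
    show ?thesis using INV[of s] sub m unfolding INVs_def by blast
  qed
  show ?thesis
  proof (cases j)
    case 0
    have "{e\<in>X. rke e \<le> j} = {}" using XE rke_pos 0 by blast
    then show ?thesis by (metis card.empty zero_le)
  next
    case (Suc s)
    show ?thesis
    proof (cases "s \<le> r")
      case True then show ?thesis using low Suc by simp
    next
      case False
      have "\<forall>e\<in>X. rke e \<le> j" using XE rke_bnd False Suc by fastforce
      moreover have "\<forall>e\<in>X. rke e \<le> Suc r" using XE rke_bnd by blast
      ultimately have eX: "{e\<in>X. rke e \<le> j} = {e\<in>X. rke e \<le> Suc r}" by blast
      have "\<forall>e\<in>M. rke e \<le> j" using MEE rke_bnd False Suc by fastforce
      then have eM: "{e\<in>M. rke e \<le> j} = {e\<in>M. rke e \<le> Suc r}" using Mle_all by auto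
      show ?thesis unfolding eX eM using low[of r] by simp
    qed
  qed
qed

lemma final_eq:
  assumes XG: "X \<subseteq> Gr" and mX: "is_matching X" and cX: "card X = card M"
    and sX: "(\<Sum>e\<in>X. rke e) = (\<Sum>e\<in>M. rke e)"
  shows "rank_maximal EE rk X"
proof -
  have XE: "X \<subseteq> EE" using XG Gr_EE by blast
  have fX: "finite X" using XE finEE finite_subset by blast
  define d where "d Y j = card {e\<in>Y. j < rke e}" for Y j
  have bX: "\<forall>e\<in>X. rke e \<le> Suc r" using XE rke_bnd by blast
  have bM: "\<forall>e\<in>M. rke e \<le> Suc r" using MEE rke_bnd by blast
  have s1: "(\<Sum>j<Suc r. d X j) = (\<Sum>j<Suc r. d M j)"
    using sum_as_cards[OF fX bX] sum_as_cards[OF finM bM] sX unfolding d_def by simp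
  have dle: "d M j \<le> d X j" for j
    using cum_le[OF XG mX, of j] card_split_le[OF fX, of rke j] card_split_le[OF finM, of rke j] cX
    unfolding d_def by linarith
  have deq: "d M j = d X j" if "j < Suc r" for j
    using sum_mono_inv[OF s1[symmetric] dle] that by simp
  have ceq: "card {e\<in>X. rke e \<le> j} = card {e\<in>M. rke e \<le> j}" for j
  proof (cases "j < Suc r")
    case True
    then show ?thesis using deq[OF True] card_split_le[OF fX, of rke j] card_split_le[OF finM, of rke j] cX
      unfolding d_def by linarith
  next
    case False
    have "{e\<in>X. rke e \<le> j} = X" using bX False by auto
    moreover have "{e\<in>M. rke e \<le> j} = M" using bM False by auto
    ultimately show ?thesis using cX by simp
  qed
  have sig: "signature rk X = signature rk M"
  proof
    fix j show "signature rk X j = signature rk M j"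
    proof (cases j)
      case 0
      have e1: "{e\<in>X. rke e = 0} = {}" using XE rke_pos by fastforce
      have e2: "{e\<in>M. rke e = 0} = {}" using MEE rke_pos by fastforce
      show ?thesis unfolding signature_def 0 e1 e2 ..
    next
      case (Suc j')
      show ?thesis using ceq[of j] ceq[of j'] cum_split[OF fX, of rke j'] cum_split[OF finM, of rke j']
        unfolding signature_def Suc by linarith
    qed
  qed
  show ?thesis unfolding rank_maximal_def using XE mX sig rm unfolding rank_maximal_def by simp
qed

lemma nat_sum_from_int:
  "(\<Sum>e\<in>X. int (rke e)) = (\<Sum>e\<in>M. int (rke e)) \<Longrightarrow> (\<Sum>e\<in>X. rke e) = (\<Sum>e\<in>M. rke e)"
  by (metis (no_types) of_nat_eq_iff of_nat_sum)

lemma sink_unmatched: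
  assumes "is_sink A QQ EE rk (Suc r) M p" shows "p \<notin> snd ` M"
proof
  assume "p \<in> snd ` M"
  then obtain x where x: "(x,p) \<in> M" by force
  then have "(x,p) \<in> Gr" using M_Gr by blast
  then have "sw_edge M Gr p p" using x unfolding sw_edge_def by blast
  then show False using assms unfolding is_sink_def by blast
qed

lemma path_case:
  assumes T: "switching_path A QQ EE rk (Suc r) M T"
  shows "rank_maximal EE rk (apply_path M T)"
proof -
  define k where "k = length T"
  define I where "I = {..<k - 1}"
  define a where "a i = partner M (T!i)" for i
  define src where "src i = T!i" for i
  define dst where "dst i = T!(Suc i)" for i
  have dT: "distinct T" and ne: "T \<noteq> []" using T unfolding switching_path_def by auto
  have sw: "sw_edge M Gr (T!i) (T!Suc i)" if "i \<in> I" for i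
    using T that unfolding switching_path_def I_def k_def by auto
  have eM: "(a i, src i) \<in> M" and eG: "(a i, dst i) \<in> Gr" if i: "i \<in> I" for i
  proof -
    obtain x where x: "(x, T!i) \<in> M" "(x, T!Suc i) \<in> Gr" using sw[OF i] unfolding sw_edge_def by blast
    have "a i = x" unfolding a_def using partner_eq[OF mM x(1)] .
    then show "(a i, src i) \<in> M" "(a i, dst i) \<in> Gr" using x unfolding src_def dst_def by auto
  qed
  have isrc: "inj_on src I"
    by (rule inj_onI) (use dT in \<open>auto simp: src_def I_def k_def nth_eq_iff_index_eq\<close>)
  have idst: "inj_on dst I"
    by (rule inj_onI) (use dT in \<open>auto simp: dst_def I_def k_def nth_eq_iff_index_eq\<close>)
  have sink: "T!(k-1) \<notin> snd ` M"
  proof -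
    have "last T = T!(k-1)" using ne unfolding k_def by (simp add: last_conv_nth)
    then show ?thesis using sink_unmatched T unfolding switching_path_def by metis
  qed
  have dstc: "\<forall>i\<in>I. dst i \<in> src ` I \<or> dst i \<notin> snd ` M"
  proof
    fix i assume i: "i \<in> I"
    show "dst i \<in> src ` I \<or> dst i \<notin> snd ` M"
    proof (cases "Suc i < k - 1")
      case True
      then have "dst i = src (Suc i)" "Suc i \<in> I" unfolding dst_def src_def I_def by auto
      then show ?thesis by blast
    next
      case False
      then have "Suc i = k - 1" using i unfolding I_def by auto
      then show ?thesis using sink unfolding dst_def by simp
    qed
  qed
  have fI: "finite I" unfolding I_def by simp
  define Rem where "Rem = (\<lambda>i. (a i, src i)) ` I"
  define Add where "Add = (\<lambda>i. (a i, dst i)) ` I"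
  note ex = exchange[OF mM finM fI isrc idst, of a, OF ballI[OF eM] dstc]
  have ap: "apply_path M T = (M - Rem) \<union> Add"
  proof -
    have 1: "{(partner M (T ! i), T ! i) | i. Suc i < length T} = Rem"
      unfolding Rem_def I_def a_def src_def k_def by force
    have 2: "{(partner M (T ! i), T ! Suc i) | i. Suc i < length T} = Add"
      unfolding Add_def I_def a_def dst_def k_def by force
    show ?thesis unfolding apply_path_def 1 2 ..
  qed
  have m: "is_matching (apply_path M T)" using ex(1) unfolding ap Rem_def Add_def .
  have G: "apply_path M T \<subseteq> Gr" unfolding ap Add_def using M_Gr eG by blast
  have c: "card (apply_path M T) = card M"
    using ex(2) card_fst[OF m] card_fst[OF mM] unfolding ap Rem_def Add_def by metis
  have w: "(\<Sum>i\<in>I. int (rke (a i, dst i)) - int (rke (a i, src i))) = 0"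
  proof -
    have "(\<Sum>i\<in>I. int (rke (a i, dst i)) - int (rke (a i, src i))) = (\<Sum>i < length T - 1. sw_weight rk M (T ! i) (T ! Suc i))"
      unfolding I_def k_def sw_weight_def a_def src_def dst_def by simp
    then show ?thesis using T unfolding switching_path_def by simp
  qed
  have "(\<Sum>e\<in>apply_path M T. int (rke e)) = (\<Sum>e\<in>M. int (rke e))"
    using ex(3)[of "\<lambda>e. int (rke e)"] w unfolding ap Rem_def Add_def by simp
  then have s: "(\<Sum>e\<in>apply_path M T. rke e) = (\<Sum>e\<in>M. rke e)" by (rule nat_sum_from_int)
  show ?thesis using final_eq[OF G m c s] .
qed

lemma suc_mod_inj: "i < k \<Longrightarrow> j < k \<Longrightarrow> Suc i mod k = Suc j mod k \<Longrightarrow> i = (j::nat)"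
proof -
  assume i: "i < k" and j: "j < k" and e: "Suc i mod k = Suc j mod k"
  have mi: "Suc i mod k = (if Suc i = k then 0 else Suc i)" using i by auto
  have mj: "Suc j mod k = (if Suc j = k then 0 else Suc j)" using j by auto
  show "i = j" using e mi mj by (auto split: if_splits)
qed

lemma cycle_case:
  assumes C: "switching_cycle A QQ EE rk (Suc r) M C"
  shows "rank_maximal EE rk (apply_cycle M C)"
proof -
  define k where "k = length C"
  define I where "I = {..<k}"
  define a where "a i = partner M (C!i)" for i
  define src where "src i = C!i" for i
  define dst where "dst i = C!(Suc i mod k)" for i
  have dC: "distinct C" and ne: "C \<noteq> []" using C unfolding switching_cycle_def by auto
  have k0: "0 < k" using ne unfolding k_def by simp
  have sw: "sw_edge M Gr (C!i) (C!(Suc i mod k))" if "i \<in> I" for i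
    using C that unfolding switching_cycle_def I_def k_def by auto
  have eM: "(a i, src i) \<in> M" and eG: "(a i, dst i) \<in> Gr" if i: "i \<in> I" for i
  proof -
    obtain x where x: "(x, C!i) \<in> M" "(x, C!(Suc i mod k)) \<in> Gr" using sw[OF i] unfolding sw_edge_def by blast
    have "a i = x" unfolding a_def using partner_eq[OF mM x(1)] .
    then show "(a i, src i) \<in> M" "(a i, dst i) \<in> Gr" using x unfolding src_def dst_def by auto
  qed
  have isrc: "inj_on src I"
    by (rule inj_onI) (use dC in \<open>auto simp: src_def I_def k_def nth_eq_iff_index_eq\<close>)
  have idst: "inj_on dst I"
  proof (rule inj_onI)
    fix i j assume i: "i \<in> I" "j \<in> I" "dst i = dst j"
    have "Suc i mod k < k" "Suc j mod k < k" using k0 by auto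
    then have "Suc i mod k = Suc j mod k" using i(3) dC unfolding dst_def k_def by (simp add: nth_eq_iff_index_eq)
    then show "i = j" using suc_mod_inj i(1,2) unfolding I_def by auto
  qed
  have dstc: "\<forall>i\<in>I. dst i \<in> src ` I \<or> dst i \<notin> snd ` M"
  proof
    fix i assume i: "i \<in> I"
    have "Suc i mod k \<in> I" using k0 unfolding I_def by simp
    moreover have "dst i = src (Suc i mod k)" unfolding dst_def src_def ..
    ultimately show "dst i \<in> src ` I \<or> dst i \<notin> snd ` M" by blast
  qed
  have fI: "finite I" unfolding I_def by simp
  define Rem where "Rem = (\<lambda>i. (a i, src i)) ` I"
  define Add where "Add = (\<lambda>i. (a i, dst i)) ` I"
  note ex = exchange[OF mM finM fI isrc idst, of a, OF ballI[OF eM] dstc]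
  have ap: "apply_cycle M C = (M - Rem) \<union> Add"
  proof -
    have 1: "{(partner M (C ! i), C ! i) | i. i < length C} = Rem"
      unfolding Rem_def I_def a_def src_def k_def by force
    have 2: "{(partner M (C ! i), C ! ((Suc i) mod length C)) | i. i < length C} = Add"
      unfolding Add_def I_def a_def dst_def k_def by force
    show ?thesis unfolding apply_cycle_def 1 2 ..
  qed
  have m: "is_matching (apply_cycle M C)" using ex(1) unfolding ap Rem_def Add_def .
  have G: "apply_cycle M C \<subseteq> Gr" unfolding ap Add_def using M_Gr eG by blast
  have c: "card (apply_cycle M C) = card M"
    using ex(2) card_fst[OF m] card_fst[OF mM] unfolding ap Rem_def Add_def by metis
  have w: "(\<Sum>i\<in>I. int (rke (a i, dst i)) - int (rke (a i, src i))) = 0"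
  proof -
    have "(\<Sum>i\<in>I. int (rke (a i, dst i)) - int (rke (a i, src i))) = (\<Sum>i < length C. sw_weight rk M (C ! i) (C ! ((Suc i) mod length C)))"
      unfolding I_def k_def sw_weight_def a_def src_def dst_def by simp
    then show ?thesis using C unfolding switching_cycle_def by simp
  qed
  have "(\<Sum>e\<in>apply_cycle M C. int (rke e)) = (\<Sum>e\<in>M. int (rke e))"
    using ex(3)[of "\<lambda>e. int (rke e)"] w unfolding ap Rem_def Add_def by simp
  then have s: "(\<Sum>e\<in>apply_cycle M C. rke e) = (\<Sum>e\<in>M. rke e)" by (rule nat_sum_from_int)
  show ?thesis using final_eq[OF G m c s] .
qed

end

theorem lemma2:
  fixes A :: "'a set" and P :: "'p set" and E :: "('a \<times> 'p) set"
    and rank :: "'a \<Rightarrow> 'p \<Rightarrow> nat" and r :: nat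
    and M :: "('a \<times> ('p + 'a)) set"
  assumes "finite A" and "finite P" and "E \<subseteq> A \<times> P"
    and "\<forall>(a,p) \<in> E. 1 \<le> rank a p \<and> rank a p \<le> r"
    and "rank_maximal (ext_edges A E) (ext_rank r rank) M"
  shows "(\<forall>T. switching_path A (ext_posts A P) (ext_edges A E) (ext_rank r rank) (Suc r) M T
              \<longrightarrow> rank_maximal (ext_edges A E) (ext_rank r rank) (apply_path M T))
       \<and> (\<forall>C. switching_cycle A (ext_posts A P) (ext_edges A E) (ext_rank r rank) (Suc r) M C
              \<longrightarrow> rank_maximal (ext_edges A E) (ext_rank r rank) (apply_cycle M C))"
proof -
  interpret RM A P E rank r M using assms by unfold_locales
  show ?thesis using path_case cycle_case by blast
qed


end
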